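(* For $A\in\mathbb{R}^{m\times n}$ define $\Phi_{m,n}(A)=\mathbb{E}_{u\sim\mathcal{S}^{m-1},\,v\sim\mathcal{S}^{n-1}}\left[e^{u^\top A v}\right]$, where $u$ and $v$ are independent and uniformly distributed on the Euclidean unit spheres $\mathcal{S}^{m-1}\subset\mathbb{R}^m$ and $\mathcal{S}^{n-1}\subset\mathbb{R}^n$. Then for any $A\in\mathbb{R}^{m\times n}$, any $\lambda\in\mathbb{R}$ and any $\varepsilon\in(0,1)$, $$\Phi_{m,n}(\lambda A)\ge (1-\varepsilon^2)^{\frac{m+n}{2}}\, e^{\varepsilon^2\|\lambda A\|},$$ where $\|\cdot\|$ denotes the operator norm (largest singular value).
   Context: $\mathcal{S}^{k-1}=\{x\in\mathbb{R}^k:\|x\|=1\}$ with the Euclidean norm; for $k=1$ this is $\{-1,1\}$ with the uniform distribution. *)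

theory Defs
  imports "HOL-Analysis.Analysis"
begin

text \<open>Uniform (normalised surface) probability measure on the unit sphere of real^'k,
  realised as the cone measure: the push-forward of the normalised Lebesgue measure
  on the closed unit ball under radial projection x \<mapsto> x / |x|.
  For k = 1 this is the uniform distribution on {-1, 1}.\<close>
definition sphere_unif :: "('k::finite) itself \<Rightarrow> (real ^ 'k) measure" where
  "sphere_unif _ = distr (uniform_measure lborel (cball 0 1)) borel (\<lambda>x. x /\<^sub>R norm x)"

text \<open>Phi_{m,n}(A) = E_{u,v} exp(u^T A v), u, v independent uniform on the spheres.\<close>
definition Phi :: "real ^ 'n ^ 'm \<Rightarrow> real" where
  "Phi A = integral\<^sup>L (sphere_unif TYPE('m) \<Otimes>\<^sub>M sphere_unif TYPE('n))
              (\<lambda>(u, v). exp (u \<bullet> (A *v v)))"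

end

theory Submission
  imports Defs "HOL-Probability.Probability"
begin


(* ---- A1 ---- *)
definition gco :: "real \<Rightarrow> nat \<Rightarrow> real" where
  "gco k j = 1 / (4^j * fact j * pochhammer (k/2) j)"

definition GG :: "real \<Rightarrow> real \<Rightarrow> real" where
  "GG k z = (\<Sum>j. gco k j * z^j)"

lemma pochhammer_ge_pow: "x \<ge> 0 \<Longrightarrow> pochhammer (x::real) j \<ge> x ^ j"
proof -
  assume x: "x \<ge> 0"
  have "x ^ j = (\<Prod>i\<in>{0..<j}. x)" by simp
  also have "\<dots> \<le> (\<Prod>i\<in>{0..<j}. x + of_nat i)"
    by (rule prod_mono) (use x in auto)
  finally show ?thesis by (simp add: pochhammer_prod)
qed

lemma gco_pos: "k \<ge> 1 \<Longrightarrow> gco k j > 0"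
  unfolding gco_def
  by (auto intro!: mult_pos_pos pochhammer_pos)

lemma gco_le: assumes "k \<ge> 1" shows "gco k j \<le> inverse (fact j)"
proof -
  have "pochhammer (k/2) j \<ge> (1/2)^j"
    using pochhammer_ge_pow[of "k/2" j] assms power_mono[of "1/2" "k/2" j] by auto
  hence "4^j * pochhammer (k/2) j \<ge> (4::real)^j * (1/2)^j" by simp
  also have "(4::real)^j * (1/2)^j = 2^j" by (simp add: power_mult_distrib[symmetric])
  finally have *: "4^j * pochhammer (k/2) j \<ge> (1::real)" using one_le_power[of "2::real" j] by linarith
  have "gco k j = inverse (fact j) * inverse (4^j * pochhammer (k/2) j)"
    by (simp add: gco_def field_simps)
  also have "\<dots> \<le> inverse (fact j) * 1"
    using * by (intro mult_left_mono) (auto simp: inverse_le_1_iff simp del: inverse_mult_distrib)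
  finally show ?thesis by simp
qed

lemma gco_summable: assumes "k \<ge> 1" shows "summable (\<lambda>j. gco k j * z^j)"
proof (rule summable_comparison_test[OF _ summable_exp[of "\<bar>z\<bar>"]])
  show "\<exists>N. \<forall>n\<ge>N. norm (gco k n * z ^ n) \<le> inverse (fact n) * \<bar>z\<bar> ^ n"
    using gco_le[OF assms] gco_pos[OF assms]
    by (intro exI[of _ 0] allI impI) (auto simp: abs_mult power_abs less_imp_le intro!: mult_right_mono)
qed

lemma gco_Suc: assumes "k \<ge> 1"
  shows "gco k (Suc j) * (4 * (real j + 1) * (k/2 + real j)) = gco k j"
proof -
  have p: "pochhammer (k/2) j > 0" using assms by (intro pochhammer_pos) auto
  have "k/2 + real j > 0" using assms by auto
  moreover have "fact j > (0::real)" by simp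
  moreover have "(4::real)^j > 0" by simp
  ultimately show ?thesis unfolding gco_def pochhammer_Suc fact_Suc power_Suc of_nat_mult of_nat_Suc
    by (simp add: divide_simps)

qed


(* ---- A2 ---- *)
definition G1 :: "real \<Rightarrow> real \<Rightarrow> real" where
  "G1 k z = (\<Sum>j. diffs (gco k) j * z^j)"
definition G2 :: "real \<Rightarrow> real \<Rightarrow> real" where
  "G2 k z = (\<Sum>j. diffs (diffs (gco k)) j * z^j)"

lemma G1_summable: "k \<ge> 1 \<Longrightarrow> summable (\<lambda>j. diffs (gco k) j * z^j)"
  by (rule termdiff_converges_all) (rule gco_summable)

lemma G2_summable: "k \<ge> 1 \<Longrightarrow> summable (\<lambda>j. diffs (diffs (gco k)) j * z^j)"
  by (rule termdiff_converges_all) (rule G1_summable)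

lemma GG_deriv: "k \<ge> 1 \<Longrightarrow> (GG k has_real_derivative G1 k z) (at z)"
  unfolding GG_def G1_def
  by (rule termdiffs_strong_converges_everywhere) (rule gco_summable)

lemma G1_deriv: "k \<ge> 1 \<Longrightarrow> (G1 k has_real_derivative G2 k z) (at z)"
  unfolding G2_def G1_def[abs_def]
  by (rule termdiffs_strong_converges_everywhere) (rule G1_summable)

lemma GG_ode: assumes k: "k \<ge> 1" shows "2 * k * G1 k z + 4 * z * G2 k z = GG k z"
proof -
  define f where "f j = real j * diffs (gco k) j * z^j" for j
  have s1: "(\<lambda>j. diffs (gco k) j * z^j) sums G1 k z"
    unfolding G1_def using G1_summable[OF k] by (simp add: summable_sums)
  have s2: "(\<lambda>j. diffs (diffs (gco k)) j * z^j) sums G2 k z"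
    unfolding G2_def using G2_summable[OF k] by (simp add: summable_sums)
  have "(\<lambda>j. f (Suc j)) = (\<lambda>j. z * (diffs (diffs (gco k)) j * z^j))"
    by (auto simp: f_def diffs_def fun_eq_iff algebra_simps)
  with s2 have "(\<lambda>j. f (Suc j)) sums (z * G2 k z)" by (simp add: sums_mult)
  hence "f sums (z * G2 k z + f 0)" by (simp add: sums_Suc_iff)
  hence sf: "f sums (z * G2 k z)" by (simp add: f_def)
  have "(\<lambda>j. 2 * k * (diffs (gco k) j * z^j) + 4 * f j) sums (2 * k * G1 k z + 4 * (z * G2 k z))"
    by (intro sums_add sums_mult s1 sf)
  moreover have "(\<lambda>j. 2 * k * (diffs (gco k) j * z^j) + 4 * f j) = (\<lambda>j. gco k j * z^j)"
  proof
    fix j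
    have "2 * k * (diffs (gco k) j * z^j) + 4 * f j
        = gco k (Suc j) * (4 * (real j + 1) * (k/2 + real j)) * z^j"
      by (simp add: f_def diffs_def algebra_simps)
    also have "\<dots> = gco k j * z^j" using gco_Suc[OF k] by simp
    finally show "2 * k * (diffs (gco k) j * z^j) + 4 * f j = gco k j * z^j" .
  qed
  ultimately have "(\<lambda>j. gco k j * z^j) sums (2 * k * G1 k z + 4 * (z * G2 k z))" by simp
  thus ?thesis unfolding GG_def by (simp add: sums_iff)
qed

lemma GG_ge1: assumes k: "k \<ge> 1" and z: "z \<ge> 0" shows "GG k z \<ge> 1"
proof -
  have "(\<Sum>j<1. gco k j * z^j) \<le> GG k z"
    unfolding GG_def
    by (rule sum_le_suminf[OF gco_summable[OF k]]) (use gco_pos[OF k] z in \<open>auto intro!: mult_nonneg_nonneg simp: less_imp_le\<close>)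
  thus ?thesis by (simp add: gco_def)
qed

lemma GG_0: "GG k 0 = 1"
  unfolding GG_def using powser_zero[of "gco k"] by (simp add: gco_def)


(* ---- A3 ---- *)
lemma pow_pred_aux: "t > 0 \<Longrightarrow> real (K - 1) * t ^ (K - 1 - 1) * t = real (K - 1) * (t::real) ^ (K - 1)"
  by (cases K; cases "K - 1") auto

lemma pow_K: "K \<ge> 1 \<Longrightarrow> (x::real) ^ K = x ^ (K - 1) * x"
  by (cases K) auto

lemma frac_aux: "(b::real) \<noteq> 0 \<Longrightarrow> c \<noteq> 0 \<Longrightarrow> a * b / c / b\<^sup>2 = a / (c * b)"
  by (simp add: field_simps power2_eq_square)

lemma dH_alg:
  fixes s k x :: real
  assumes s: "s > 0" and k: "k \<ge> 1" and sq: "s\<^sup>2 = k\<^sup>2 + 4 * x\<^sup>2"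
  shows "(4 * x * (k + s) - 2 * x\<^sup>2 * (4 * x / s)) / (k + s)\<^sup>2
        + k / 2 * (- (2 * k * (4 * x / s)) / (k + s)\<^sup>2 / (2 * k / (k + s))) = 2 * x / (k + s)"
proof -
  define b where "b = k + s"
  have b: "b > 0" using s k by (simp add: b_def)
  have k0: "k \<noteq> 0" using k by simp
  have t2: "k / 2 * (- (2 * k * (4 * x / s)) / b\<^sup>2 / (2 * k / b)) = - (2 * k * x / (s * b))"
    using b s k0 by (simp add: field_simps power2_eq_square)
  have t1: "(4 * x * b - 2 * x\<^sup>2 * (4 * x / s)) / b\<^sup>2 = (4 * x * b * s - 8 * x^3) / (s * b\<^sup>2)"
    using b s by (simp add: field_simps power2_eq_square power3_eq_cube)
  have num: "4 * x * b * s - 8 * x^3 - 2 * k * x * b = 2 * x * s * b"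
  proof -
    have "8 * x^3 = 2 * x * (4 * x\<^sup>2)" by (simp add: power2_eq_square power3_eq_cube)
    also have "4 * x\<^sup>2 = (s - k) * b" using sq by (simp add: b_def power2_eq_square algebra_simps)
    finally show ?thesis by (simp add: b_def algebra_simps)
  qed
  have "(4 * x * b * s - 8 * x^3) / (s * b\<^sup>2) - 2 * k * x / (s * b) = (4 * x * b * s - 8 * x^3 - 2 * k * x * b) / (s * b\<^sup>2)"
    using b s by (simp add: field_simps power2_eq_square)
  also have "\<dots> = 2 * x / b" unfolding num using b s by (simp add: field_simps power2_eq_square)
  finally have X: "(4 * x * b * s - 8 * x^3) / (s * b\<^sup>2) - 2 * k * x / (s * b) = 2 * x / b" .
  have beq: "k + s = b" by (simp add: b_def)
  show ?thesis unfolding beq t1 t2 using X by simp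
qed

lemma e2_alg:
  fixes b x k :: real
  assumes b: "b > 0" and h: "b\<^sup>2 - 4 * x\<^sup>2 = 2 * k * b"
  shows "1 - (2 * x / b)\<^sup>2 = 2 * k / b"
proof -
  have "(2 * x / b)\<^sup>2 = 4 * x\<^sup>2 / b\<^sup>2" by (simp add: power_divide power_mult_distrib)
  also have "4 * x\<^sup>2 = b\<^sup>2 - 2 * k * b" using h by simp
  also have "(b\<^sup>2 - 2 * k * b) / b\<^sup>2 = 1 - 2 * k / b" using b by (simp add: field_simps power2_eq_square)
  finally show ?thesis by simp
qed

lemma q_alg0:
  fixes s k b :: real
  assumes s: "s > 0" and b: "b > 0"
  shows "2 * k / b - (k - 1) * (2 / b) - 2 * k / (s * b) = 2 * (s - k) / (s * b)"
  using s b by (simp add: field_simps)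

lemma q_alg:
  fixes s k :: real
  assumes s: "s > 0" and b: "k + s > 0"
  shows "2 * k / (k + s) - (k - 1) * (2 / (k + s)) - 2 * k / (s * (k + s)) = 2 * (s - k) / (s * (k + s))"
  by (rule q_alg0[OF s b])

lemma GG_lower:
  fixes K :: nat and t eps :: real
  assumes K: "K \<ge> 1" and t: "t \<ge> 0" and e0: "0 < eps" and e1: "eps < 1"
  shows "GG (real K) (t\<^sup>2) \<ge> (1 - eps\<^sup>2) powr (real K / 2) * exp (eps * t)"
proof -
  define k where "k = real K"
  have k1: "k \<ge> 1" using K by (simp add: k_def)
  define s where "s t = sqrt (k\<^sup>2 + 4 * t\<^sup>2)" for t
  define e where "e t = 2 * t / (k + s t)" for t
  define H where "H t = 2 * t\<^sup>2 / (k + s t) + k / 2 * ln (2 * k / (k + s t))" for t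
  define F where "F t = GG k (t\<^sup>2)" for t
  define F' where "F' t = 2 * t * G1 k (t\<^sup>2)" for t
  define P where "P t = t ^ (K - 1) * F' t" for t
  define R where "R t = t ^ (K - 1) * e t * F t" for t
  define Q where "Q t = exp (H t) * (P t - R t)" for t
  have s_pos: "s x > 0" for x unfolding s_def using k1 by (intro real_sqrt_gt_zero) (auto intro: add_pos_nonneg)
  have s_ge: "s x \<ge> k" for x unfolding s_def using k1 by (intro real_le_rsqrt) auto
  have s_sq: "(s x)\<^sup>2 = k\<^sup>2 + 4 * x\<^sup>2" for x unfolding s_def by (simp add: add_nonneg_nonneg)
  have ks_pos: "k + s x > 0" for x using s_pos[of x] k1 by linarith
  have ds: "(s has_real_derivative (4 * x / s x)) (at x)" for x
  proof -
    have "((\<lambda>x. sqrt (k\<^sup>2 + 4 * x\<^sup>2)) has_real_derivative (inverse (sqrt (k\<^sup>2 + 4 * x\<^sup>2)) / 2 * (4 * (2 * x)))) (at x)"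
      using s_pos[of x] unfolding s_def
      by (auto intro!: derivative_eq_intros simp: power2_eq_square)
    moreover have "s = (\<lambda>x. sqrt (k\<^sup>2 + 4 * x\<^sup>2))" by (simp add: s_def[abs_def])
    ultimately show ?thesis by (simp add: s_def field_simps)
  qed
  have de: "(e has_real_derivative (2 * k / (s x * (k + s x)))) (at x)" for x
  proof -
    have "(e has_real_derivative ((2 * (k + s x) - 2 * x * (4 * x / s x)) / (k + s x)\<^sup>2)) (at x)"
      unfolding e_def[abs_def] using ks_pos[of x] s_pos[of x]
      by (auto intro!: derivative_eq_intros ds simp: power2_eq_square)
    also have "(2 * (k + s x) - 2 * x * (4 * x / s x)) / (k + s x)\<^sup>2 = 2 * k / (s x * (k + s x))"
    proof -
      have "4 * x\<^sup>2 = (s x)\<^sup>2 - k\<^sup>2" using s_sq[of x] by simp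
      hence "2 * (k + s x) * s x - 2 * x * (4 * x) = 2 * k * (k + s x)"
        by (simp add: power2_eq_square algebra_simps)
      hence "2 * (k + s x) - 2 * x * (4 * x / s x) = 2 * k * (k + s x) / s x"
        using s_pos[of x] by (simp add: field_simps)
      hence "(2 * (k + s x) - 2 * x * (4 * x / s x)) / (k + s x)\<^sup>2 = (2 * k * (k + s x) / s x) / (k + s x)\<^sup>2"
        by simp
      also have "\<dots> = 2 * k / (s x * (k + s x))"
        using s_pos[of x] ks_pos[of x] frac_aux[of "k + s x" "s x" "2 * k"] by simp
      finally show ?thesis .
    qed
    finally show ?thesis .
  qed
  have dH: "(H has_real_derivative e x) (at x)" for x
  proof -
    have "(H has_real_derivative
       ((4 * x * (k + s x) - 2 * x\<^sup>2 * (4 * x / s x)) / (k + s x)\<^sup>2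
        + k / 2 * (- (2 * k * (4 * x / s x)) / (k + s x)\<^sup>2 / (2 * k / (k + s x))))) (at x)"
      unfolding H_def[abs_def] using ks_pos[of x] s_pos[of x] k1
      apply (auto intro!: derivative_eq_intros ds simp: power2_eq_square)
      apply (subgoal_tac "k * s x + s x * s x > 0" "k * (s x * 2) + s x * (s x * 2) > 0")
        apply (simp add: field_simps)
       apply (smt (verit) mult_pos_pos)+
      done
    also have "((4 * x * (k + s x) - 2 * x\<^sup>2 * (4 * x / s x)) / (k + s x)\<^sup>2
        + k / 2 * (- (2 * k * (4 * x / s x)) / (k + s x)\<^sup>2 / (2 * k / (k + s x)))) = e x"
      unfolding e_def by (rule dH_alg[OF s_pos k1 s_sq])
    finally show ?thesis .
  qed
  have dF: "(F has_real_derivative F' x) (at x)" for x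
  proof -
    have "((\<lambda>x. GG k (x\<^sup>2)) has_real_derivative G1 k (x\<^sup>2) * (2 * x)) (at x)"
      by (rule DERIV_chain2[OF GG_deriv[OF k1]]) (auto intro!: derivative_eq_intros)
    thus ?thesis by (simp add: F_def[abs_def] F'_def algebra_simps)
  qed
  have dG1: "((\<lambda>x. G1 k (x\<^sup>2)) has_real_derivative G2 k (x\<^sup>2) * (2 * x)) (at x)" for x
    by (rule DERIV_chain2[OF G1_deriv[OF k1]]) (auto intro!: derivative_eq_intros)
  have dP: "(P has_real_derivative (x ^ (K - 1) * F x)) (at x)" for x
  proof -
    have Peq: "P = (\<lambda>x. 2 * x ^ K * G1 k (x\<^sup>2))"
      using pow_K[OF K] by (auto simp: P_def F'_def fun_eq_iff algebra_simps)
    have "(P has_real_derivative (2 * (real K * x ^ (K - 1)) * G1 k (x\<^sup>2) + 2 * x ^ K * (G2 k (x\<^sup>2) * (2 * x)))) (at x)"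
      unfolding Peq
      by (auto intro!: derivative_eq_intros dG1)
    also have "2 * (real K * x ^ (K - 1)) * G1 k (x\<^sup>2) + 2 * x ^ K * (G2 k (x\<^sup>2) * (2 * x))
       = x ^ (K - 1) * (2 * k * G1 k (x\<^sup>2) + 4 * x\<^sup>2 * G2 k (x\<^sup>2))"
    proof -
      have "x ^ K = x ^ (K - 1) * x" using K by (rule pow_K)
      thus ?thesis by (simp add: k_def algebra_simps power2_eq_square)
    qed
    also have "\<dots> = x ^ (K - 1) * F x" using GG_ode[OF k1] by (simp add: F_def)
    finally show ?thesis .
  qed
  have dR: "(R has_real_derivative (real (K - 1) * x ^ (K - 1 - 1) * e x * F x
      + x ^ (K - 1) * (2 * k / (s x * (k + s x))) * F x + x ^ (K - 1) * e x * F' x)) (at x)" for x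
    unfolding R_def[abs_def]
    by (auto intro!: derivative_eq_intros de dF simp: algebra_simps)
  have dQ: "(Q has_real_derivative (exp (H x) * e x * (P x - R x) + exp (H x) *
      (x ^ (K - 1) * F x - (real (K - 1) * x ^ (K - 1 - 1) * e x * F x
      + x ^ (K - 1) * (2 * k / (s x * (k + s x))) * F x + x ^ (K - 1) * e x * F' x)))) (at x)" for x
    unfolding Q_def[abs_def]
    by (auto intro!: derivative_eq_intros dH dP dR)
  have Fpos: "F x \<ge> 1" for x unfolding F_def by (rule GG_ge1[OF k1]) simp
  have Q'_nonneg: "exp (H x) * e x * (P x - R x) + exp (H x) *
      (x ^ (K - 1) * F x - (real (K - 1) * x ^ (K - 1 - 1) * e x * F x
      + x ^ (K - 1) * (2 * k / (s x * (k + s x))) * F x + x ^ (K - 1) * e x * F' x)) \<ge> 0"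
    if x: "x > 0" for x
  proof -
    have "real (K - 1) * x ^ (K - 1 - 1) = real (K - 1) * x ^ (K - 1) / x"
      using pow_pred_aux[OF x, of K] x by (simp add: field_simps)
    hence eq: "exp (H x) * e x * (P x - R x) + exp (H x) *
      (x ^ (K - 1) * F x - (real (K - 1) * x ^ (K - 1 - 1) * e x * F x
      + x ^ (K - 1) * (2 * k / (s x * (k + s x))) * F x + x ^ (K - 1) * e x * F' x))
      = exp (H x) * x ^ (K - 1) * F x * (1 - (e x)\<^sup>2 - (k - 1) * (e x / x) - 2 * k / (s x * (k + s x)))"
      using K by (simp add: P_def R_def k_def of_nat_diff algebra_simps power2_eq_square)
    have ex: "e x / x = 2 / (k + s x)" using x by (simp add: e_def)
    have e2: "1 - (e x)\<^sup>2 = 2 * k / (k + s x)"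
    proof -
      have "(k + s x)\<^sup>2 - 4 * x\<^sup>2 = 2 * k * (k + s x)" using s_sq[of x] by (simp add: power2_eq_square algebra_simps)
      thus ?thesis unfolding e_def by (rule e2_alg[OF ks_pos])
    qed
    have "1 - (e x)\<^sup>2 - (k - 1) * (e x / x) - 2 * k / (s x * (k + s x))
        = 2 * (s x - k) / (s x * (k + s x))"
      unfolding ex e2 by (rule q_alg[OF s_pos ks_pos])
    also have "\<dots> \<ge> 0" using s_ge[of x] s_pos[of x] ks_pos[of x] by simp
    finally have "1 - (e x)\<^sup>2 - (k - 1) * (e x / x) - 2 * k / (s x * (k + s x)) \<ge> 0" .
    moreover have "exp (H x) * x ^ (K - 1) * F x \<ge> 0" using Fpos[of x] x by simp
    ultimately show ?thesis unfolding eq by simp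
  qed
  have Q0: "Q 0 = 0" by (simp add: Q_def P_def R_def F'_def e_def)
  have Qnn: "Q x \<ge> 0" if x: "x \<ge> 0" for x
  proof -
    have "Q 0 \<le> Q x"
      by (rule DERIV_nonneg_imp_increasing_open[OF x, where f=Q])
         (use dQ Q'_nonneg in \<open>auto intro!: continuous_at_imp_continuous_on DERIV_isCont[OF dQ]\<close>)
    thus ?thesis using Q0 by simp
  qed
  have key: "F' x - e x * F x \<ge> 0" if x: "x > 0" for x
  proof -
    have "Q x = exp (H x) * x ^ (K - 1) * (F' x - e x * F x)"
      by (simp add: Q_def P_def R_def algebra_simps)
    with Qnn[of x] x have "exp (H x) * x ^ (K - 1) * (F' x - e x * F x) \<ge> 0" by simp
    moreover have "exp (H x) * x ^ (K - 1) > 0" using x by simp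
    ultimately show ?thesis by (simp add: zero_le_mult_iff)
  qed
  define D where "D x = F x * exp (- H x)" for x
  have dD: "(D has_real_derivative (F' x * exp (- H x) + F x * (exp (- H x) * (- e x)))) (at x)" for x
    unfolding D_def[abs_def] by (auto intro!: derivative_eq_intros dF dH)
  have H0: "H 0 = 0" using k1 by (simp add: H_def s_def)
  have "D 0 \<le> D t"
  proof (rule DERIV_nonneg_imp_increasing_open[OF t, where f=D])
    fix x :: real assume x: "0 < x" "x < t"
    have "F' x * exp (- H x) + F x * (exp (- H x) * (- e x)) = exp (- H x) * (F' x - e x * F x)"
      by (simp add: algebra_simps)
    also have "\<dots> \<ge> 0" using key[OF x(1)] by simp
    finally show "\<exists>y. (D has_real_derivative y) (at x) \<and> 0 \<le> y" using dD[of x] by blast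
  qed (auto intro!: continuous_at_imp_continuous_on DERIV_isCont[OF dD])
  hence "1 \<le> F t * exp (- H t)" using H0 by (simp add: D_def F_def GG_0)
  hence FH: "exp (H t) \<le> F t" by (simp add: exp_minus field_simps)
  (* H t \<ge> eps t + k/2 ln(1-eps^2) *)
  have e_range: "0 \<le> e t" "e t < 1"
  proof -
    show "0 \<le> e t" using t ks_pos[of t] by (simp add: e_def)
    have "(e t)\<^sup>2 < 1"
    proof -
      have "(k + s t)\<^sup>2 - 4 * t\<^sup>2 = 2 * k * (k + s t)" using s_sq[of t] by (simp add: power2_eq_square algebra_simps)
      moreover have "2 * k * (k + s t) > 0" using k1 ks_pos[of t] by simp
      ultimately have "4 * t\<^sup>2 < (k + s t)\<^sup>2" by linarith
      thus ?thesis using ks_pos[of t] by (simp add: e_def power_divide field_simps)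
    qed
    thus "e t < 1" using \<open>0 \<le> e t\<close> abs_square_less_1[of "e t"] by simp
  qed
  have e2t: "1 - (e t)\<^sup>2 = 2 * k / (k + s t)"
  proof -
    have "(k + s t)\<^sup>2 - 4 * t\<^sup>2 = 2 * k * (k + s t)" using s_sq[of t] by (simp add: power2_eq_square algebra_simps)
    thus ?thesis unfolding e_def by (rule e2_alg[OF ks_pos])
  qed
  have Heq: "H t = t * e t + k / 2 * ln (1 - (e t)\<^sup>2)"
    unfolding e2t by (simp add: H_def e_def power2_eq_square)
  have te: "t * (1 - (e t)\<^sup>2) = k * e t"
    unfolding e2t using ks_pos[of t] by (simp add: e_def field_simps)
  have pos1: "1 - (e t)\<^sup>2 > 0" using e_range abs_square_less_1[of "e t"] by simp
  have pos2: "1 - eps\<^sup>2 > 0" using e0 e1 abs_square_less_1[of eps] by simp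
  have "ln ((1 - eps\<^sup>2) / (1 - (e t)\<^sup>2)) \<le> (1 - eps\<^sup>2) / (1 - (e t)\<^sup>2) - 1"
    by (rule ln_le_minus_one) (use pos1 pos2 in simp)
  hence "ln (1 - eps\<^sup>2) - ln (1 - (e t)\<^sup>2) \<le> ((e t)\<^sup>2 - eps\<^sup>2) / (1 - (e t)\<^sup>2)"
    using pos1 pos2 by (simp add: ln_div field_simps)
  also have "\<dots> \<le> 2 * e t * (e t - eps) / (1 - (e t)\<^sup>2)"
  proof (rule divide_right_mono)
    have "0 \<le> (e t - eps)\<^sup>2" by simp
    thus "(e t)\<^sup>2 - eps\<^sup>2 \<le> 2 * e t * (e t - eps)" by (simp add: power2_eq_square algebra_simps)
  qed (use pos1 in simp)
  finally have "k / 2 * (ln (1 - eps\<^sup>2) - ln (1 - (e t)\<^sup>2)) \<le> k / 2 * (2 * e t * (e t - eps) / (1 - (e t)\<^sup>2))"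
    using k1 by (intro mult_left_mono) auto
  also have "\<dots> = (k * e t / (1 - (e t)\<^sup>2)) * (e t - eps)"
    by (simp add: algebra_simps)
  also have "k * e t / (1 - (e t)\<^sup>2) = t"
    using te pos1 by (simp add: field_simps)
  finally have "k / 2 * (ln (1 - eps\<^sup>2) - ln (1 - (e t)\<^sup>2)) \<le> t * (e t - eps)" .
  hence Hge: "eps * t + k / 2 * ln (1 - eps\<^sup>2) \<le> H t"
    unfolding Heq by (simp add: algebra_simps)
  have "(1 - eps\<^sup>2) powr (real K / 2) * exp (eps * t) = exp (eps * t + k / 2 * ln (1 - eps\<^sup>2))"
    using pos2 by (simp add: powr_def exp_add k_def algebra_simps)
  also have "\<dots> \<le> exp (H t)" using Hge by simp
  also have "\<dots> \<le> F t" by (rule FH)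
  finally show ?thesis by (simp add: F_def k_def)
qed


(* ---- B1 ---- *)
lemma measure_eqI_lessThan_sf:
  fixes M N :: "real measure"
  assumes sets: "sets M = sets borel" "sets N = sets borel"
  assumes fin: "\<And>x. emeasure M {..< x} < \<infinity>"
  assumes eq: "\<And>x. emeasure M {..< x} = emeasure N {..< x}"
  shows "M = N"
proof (rule measure_eqI_generator_eq_countable)
  let ?LT = "\<lambda>a::real. {..< a}" let ?E = "range ?LT"
  show "Int_stable ?E"
  proof (rule Int_stableI)
    fix A B assume "A \<in> ?E" "B \<in> ?E"
    then obtain a b where "A = {..<a}" "B = {..<b}" by auto
    moreover have "{..<a} \<inter> {..<b} = {..<min a b}" by auto
    ultimately show "A \<inter> B \<in> ?E" by auto
  qed
  show "?E \<subseteq> Pow UNIV" "sets M = sigma_sets UNIV ?E" "sets N = sigma_sets UNIV ?E"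
    unfolding sets borel_Iio by auto
  show "?LT`Rats \<subseteq> ?E" "(\<Union>i\<in>Rats. ?LT i) = UNIV" "\<And>a. a \<in> ?LT`Rats \<Longrightarrow> emeasure M a \<noteq> \<infinity>"
    using fin by (auto simp: less_top) (meson Rats_dense_in_real less_add_one)
qed (auto intro: eq countable_rat)

lemma scaling_ball:
  fixes h :: "'a::euclidean_space \<Rightarrow> ennreal"
  assumes h[measurable]: "h \<in> borel_measurable borel"
  assumes hom: "\<And>c x. c > 0 \<Longrightarrow> h (c *\<^sub>R x) = h x"
  assumes R: "R > 0"
  shows "(\<integral>\<^sup>+x. h x * indicator (ball 0 R) x \<partial>lborel) = ennreal (R ^ DIM('a)) * (\<integral>\<^sup>+x. h x * indicator (ball 0 1) x \<partial>lborel)"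
proof -
  have [measurable]: "\<And>r. ball (0::'a) r \<in> sets borel" by simp
  have "(\<integral>\<^sup>+x. h x * indicator (ball 0 R) x \<partial>lborel)
      = (\<integral>\<^sup>+x. h x * indicator (ball 0 R) x \<partial>(density (distr lborel borel (\<lambda>x. 0 + R *\<^sub>R x)) (\<lambda>_. \<bar>R\<bar>^DIM('a))))"
    using R by (subst lborel_affine[of R 0, symmetric]) auto
  also have "\<dots> = (\<integral>\<^sup>+x. ennreal (\<bar>R\<bar>^DIM('a)) * (h x * indicator (ball 0 R) x) \<partial>(distr lborel borel (\<lambda>x. 0 + R *\<^sub>R x)))"
    by (rule nn_integral_density) measurable
  also have "\<dots> = (\<integral>\<^sup>+x. ennreal (\<bar>R\<bar>^DIM('a)) * (h (0 + R *\<^sub>R x) * indicator (ball 0 R) (0 + R *\<^sub>R x)) \<partial>lborel)"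
    by (rule nn_integral_distr) auto
  also have "\<dots> = (\<integral>\<^sup>+x. ennreal (R^DIM('a)) * (h x * indicator (ball 0 1) x) \<partial>lborel)"
  proof (intro nn_integral_cong)
    fix x :: 'a
    have "R *\<^sub>R x \<in> ball 0 R \<longleftrightarrow> x \<in> ball 0 1" using R by (simp add: dist_norm)
    thus "ennreal (\<bar>R\<bar>^DIM('a)) * (h (0 + R *\<^sub>R x) * indicator (ball 0 R) (0 + R *\<^sub>R x))
        = ennreal (R^DIM('a)) * (h x * indicator (ball 0 1) x)"
      using R hom[OF R] by (simp add: indicator_def)
  qed
  also have "\<dots> = ennreal (R ^ DIM('a)) * (\<integral>\<^sup>+x. h x * indicator (ball 0 1) x \<partial>lborel)"
    by (rule nn_integral_cmult) measurable
  finally show ?thesis .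
qed

lemma nn_integral_pow_interval:
  assumes R: "R > 0" and D: "D \<ge> 1"
  shows "(\<integral>\<^sup>+r. ennreal (real D * r ^ (D - 1)) * indicator {0..} r * indicator {..<R} r \<partial>lborel) = ennreal (R ^ D)"
proof -
  have "(\<integral>\<^sup>+r. ennreal (real D * r ^ (D - 1)) * indicator {0..} r * indicator {..<R} r \<partial>lborel)
      = (\<integral>\<^sup>+r. ennreal (indicator {0..R} r * (real D * r ^ (D - 1))) \<partial>lborel)"
  proof (rule nn_integral_cong_AE)
    have "AE r in lborel. r \<noteq> R" by (rule AE_lborel_singleton)
    thus "AE r in lborel. ennreal (real D * r ^ (D - 1)) * indicator {0..} r * indicator {..<R} r
        = ennreal (indicator {0..R} r * (real D * r ^ (D - 1)))"
      by eventually_elim (auto simp: indicator_def)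
  qed
  also have "\<dots> = ennreal (R ^ D - 0 ^ D)"
  proof (rule nn_integral_has_integral_lborel)
    have "((\<lambda>r. real D * r ^ (D - 1)) has_integral (R ^ D - 0 ^ D)) {0..R}"
      using R by (intro fundamental_theorem_of_calculus)
        (auto intro!: derivative_eq_intros simp: has_real_derivative_iff_has_vector_derivative[symmetric])
    hence "((\<lambda>r. indicator {0..R} r * (real D * r ^ (D - 1))) has_integral (R ^ D - 0 ^ D)) {0..R}"
      by (subst has_integral_cong[where g="\<lambda>r. real D * r ^ (D - 1)"]) auto
    thus "((\<lambda>r. indicator {0..R} r * (real D * r ^ (D - 1))) has_integral (R ^ D - 0 ^ D)) UNIV"
      by (intro has_integral_on_superset[where T=UNIV and S="{0..R}"]) auto
  qed (auto simp: indicator_def)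
  finally show ?thesis using D by (simp add: power_0_left)
qed

lemma polar_formula:
  fixes h :: "'a::euclidean_space \<Rightarrow> ennreal" and W :: "real \<Rightarrow> ennreal"
  assumes h[measurable]: "h \<in> borel_measurable borel"
  assumes hom: "\<And>c x. c > 0 \<Longrightarrow> h (c *\<^sub>R x) = h x"
  assumes bnd: "\<And>x. h x \<le> ennreal Hb"
  assumes W[measurable]: "W \<in> borel_measurable borel"
  shows "(\<integral>\<^sup>+x. h x * W (norm x) \<partial>lborel) =
     (\<integral>\<^sup>+x. h x * indicator (ball 0 1) x \<partial>lborel) *
     (\<integral>\<^sup>+r. ennreal (real DIM('a) * r ^ (DIM('a) - 1)) * indicator {0..} r * W r \<partial>lborel)"
proof -
  define I where "I = (\<integral>\<^sup>+x. h x * indicator (ball 0 1) x \<partial>lborel)"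
  define \<nu> where "\<nu> = distr (density lborel h) (borel :: real measure) norm"
  define \<mu> where "\<mu> = density (lborel :: real measure) (\<lambda>r. I * (ennreal (real DIM('a) * r ^ (DIM('a) - 1)) * indicator {0..} r))"
  have D1: "DIM('a) \<ge> 1" by (simp add: DIM_positive Suc_leI)
  have nu_lt: "emeasure \<nu> {..<R} = (\<integral>\<^sup>+x. h x * indicator (ball 0 R) x \<partial>lborel)" for R
  proof -
    have "norm -` {..<R} \<inter> space (density lborel h) = ball 0 R" by (auto simp: dist_norm)
    thus ?thesis unfolding \<nu>_def
      by (subst emeasure_distr) (auto simp: emeasure_density)
  qed
  have "\<nu> = \<mu>"
  proof (rule measure_eqI_lessThan_sf)
    show "sets \<nu> = sets borel" "sets \<mu> = sets borel" by (simp_all add: \<nu>_def \<mu>_def)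
  next
    fix R :: real
    have "(\<integral>\<^sup>+x. h x * indicator (ball 0 R) x \<partial>lborel) \<le> (\<integral>\<^sup>+x. ennreal Hb * indicator (cball (0::'a) (max R 0)) x \<partial>lborel)"
    proof (rule nn_integral_mono)
      fix x :: 'a
      show "h x * indicator (ball 0 R) x \<le> ennreal Hb * indicator (cball 0 (max R 0)) x"
        using bnd[of x] by (auto simp: indicator_def)
    qed
    also have "\<dots> = ennreal Hb * emeasure lborel (cball (0::'a) (max R 0))"
      by (rule nn_integral_cmult_indicator) simp
    also have "\<dots> < \<infinity>" using emeasure_lborel_cball_finite[of "0::'a" "max R 0"] by (simp add: ennreal_mult_less_top)
    finally show "emeasure \<nu> {..<R} < \<infinity>" by (simp add: nu_lt)
  next
    fix R :: real
    show "emeasure \<nu> {..<R} = emeasure \<mu> {..<R}"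
    proof (cases "R > 0")
      case True
      have "emeasure \<mu> {..<R} = (\<integral>\<^sup>+r. I * (ennreal (real DIM('a) * r ^ (DIM('a) - 1)) * indicator {0..} r * indicator {..<R} r) \<partial>lborel)"
        unfolding \<mu>_def by (subst emeasure_density) (auto simp: mult.assoc)
      also have "\<dots> = I * (\<integral>\<^sup>+r. ennreal (real DIM('a) * r ^ (DIM('a) - 1)) * indicator {0..} r * indicator {..<R} r \<partial>lborel)"
        by (rule nn_integral_cmult) measurable
      also have "\<dots> = I * ennreal (R ^ DIM('a))"
        by (simp only: nn_integral_pow_interval[OF True D1])
      finally show ?thesis
        by (simp add: nu_lt scaling_ball[OF h hom True] I_def mult.commute)
    next
      case False
      have "ball (0::'a) R = {}" using False by auto
      moreover have "emeasure \<mu> {..<R} = 0"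
      proof -
        have "emeasure \<mu> {..<R} = (\<integral>\<^sup>+r. I * (ennreal (real DIM('a) * r ^ (DIM('a) - 1)) * indicator {0..} r) * indicator {..<R} r \<partial>lborel)"
          unfolding \<mu>_def by (rule emeasure_density) auto
        also have "\<dots> = (\<integral>\<^sup>+(r::real). 0 \<partial>lborel)"
          using False by (intro nn_integral_cong) (auto simp: indicator_def)
        finally show ?thesis by simp
      qed
      ultimately show ?thesis using False by (simp add: nu_lt ball_empty)
    qed
  qed
  have "(\<integral>\<^sup>+x. h x * W (norm x) \<partial>lborel) = (\<integral>\<^sup>+r. W r \<partial>\<nu>)"
    unfolding \<nu>_def by (simp add: nn_integral_distr nn_integral_density)
  also have "\<dots> = (\<integral>\<^sup>+r. W r \<partial>\<mu>)" by (simp add: \<open>\<nu> = \<mu>\<close>)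
  also have "\<dots> = (\<integral>\<^sup>+r. I * (ennreal (real DIM('a) * r ^ (DIM('a) - 1)) * indicator {0..} r * W r) \<partial>lborel)"
    unfolding \<mu>_def by (simp add: nn_integral_density mult.assoc)
  also have "\<dots> = I * (\<integral>\<^sup>+r. ennreal (real DIM('a) * r ^ (DIM('a) - 1)) * indicator {0..} r * W r \<partial>lborel)"
    by (simp add: nn_integral_cmult)
  finally show ?thesis by (simp add: I_def)
qed


(* ---- B2 ---- *)
lemma gauss1d:
  fixes c :: real
  shows "(\<integral>\<^sup>+y. ennreal (exp (c * y - y\<^sup>2)) \<partial>lborel) = ennreal (sqrt pi * exp (c\<^sup>2 / 4))"
proof -
  have eq: "exp (c * y - y\<^sup>2) = (sqrt pi * exp (c\<^sup>2 / 4)) * normal_density (c/2) (1 / sqrt 2) y" for y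
  proof -
    have "exp (c * y - y\<^sup>2) = exp (c\<^sup>2 / 4) * exp (- (y - c/2)\<^sup>2)"
      by (simp add: exp_add[symmetric] power2_eq_square algebra_simps)
    moreover have "normal_density (c/2) (1 / sqrt 2) y = exp (- (y - c/2)\<^sup>2) / sqrt pi"
      by (simp add: normal_density_def power_divide)
    ultimately show ?thesis by simp
  qed
  have "(\<integral>\<^sup>+y. ennreal (exp (c * y - y\<^sup>2)) \<partial>lborel)
      = (\<integral>\<^sup>+y. ennreal (sqrt pi * exp (c\<^sup>2 / 4)) * ennreal (normal_density (c/2) (1 / sqrt 2) y) \<partial>lborel)"
    by (intro nn_integral_cong) (simp add: eq ennreal_mult')
  also have "\<dots> = ennreal (sqrt pi * exp (c\<^sup>2 / 4)) * (\<integral>\<^sup>+y. ennreal (normal_density (c/2) (1 / sqrt 2) y) \<partial>lborel)"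
    by (rule nn_integral_cmult) measurable
  also have "(\<integral>\<^sup>+y. ennreal (normal_density (c/2) (1 / sqrt 2) y) \<partial>lborel) = ennreal (\<integral>y. normal_density (c/2) (1 / sqrt 2) y \<partial>lborel)"
    by (rule nn_integral_eq_integral) auto
  also have "(\<integral>y. normal_density (c/2) (1 / sqrt 2) y \<partial>lborel) = 1" by simp
  finally show ?thesis by simp
qed

lemma gauss_mgf:
  fixes a :: "'a::euclidean_space" and s :: real
  shows "(\<integral>\<^sup>+x. ennreal (exp (s * (x \<bullet> a) - (norm x)\<^sup>2)) \<partial>lborel)
       = ennreal (sqrt pi ^ DIM('a) * exp (s\<^sup>2 * (norm a)\<^sup>2 / 4))"
proof -
  interpret P: product_sigma_finite "\<lambda>_::'a. lborel :: real measure"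
    by (simp add: product_sigma_finite_def sigma_finite_lborel)
  have rep: "exp (s * ((\<Sum>b\<in>Basis. f b *\<^sub>R b) \<bullet> a) - (norm (\<Sum>b\<in>Basis. f b *\<^sub>R b))\<^sup>2)
      = (\<Prod>b\<in>Basis. exp ((s * (b \<bullet> a)) * f b - (f b)\<^sup>2))" for f :: "'a \<Rightarrow> real"
  proof -
    define y where "y = (\<Sum>b\<in>Basis. f b *\<^sub>R b)"
    have yb: "y \<bullet> b = f b" if "b \<in> Basis" for b
      using that unfolding y_def by (simp add: inner_sum_left inner_Basis if_distrib cong: if_cong)
    have yb': "b \<bullet> y = f b" if "b \<in> Basis" for b using yb[OF that] by (simp add: inner_commute)
    have "y \<bullet> a = (\<Sum>b\<in>Basis. f b * (b \<bullet> a))"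
      by (subst euclidean_inner) (auto intro!: sum.cong simp: yb inner_commute[of a])
    moreover have "(norm y)\<^sup>2 = (\<Sum>b\<in>Basis. (f b)\<^sup>2)"
    proof -
      have "(norm y)\<^sup>2 = y \<bullet> y" by (rule power2_norm_eq_inner)
      also have "\<dots> = (\<Sum>b\<in>Basis. (y \<bullet> b) * (y \<bullet> b))" by (rule euclidean_inner)
      also have "\<dots> = (\<Sum>b\<in>Basis. (f b)\<^sup>2)" by (auto intro!: sum.cong simp: yb power2_eq_square)
      finally show ?thesis .
    qed
    ultimately have "s * (y \<bullet> a) - (norm y)\<^sup>2 = (\<Sum>b\<in>Basis. (s * (b \<bullet> a)) * f b - (f b)\<^sup>2)"
      by (simp add: sum_subtractf sum_distrib_left algebra_simps)
    thus ?thesis unfolding y_def[symmetric] by (simp add: exp_sum)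
  qed
  have "(\<integral>\<^sup>+x. ennreal (exp (s * (x \<bullet> a) - (norm x)\<^sup>2)) \<partial>lborel)
     = (\<integral>\<^sup>+f. ennreal (exp (s * ((\<Sum>b\<in>Basis. f b *\<^sub>R b) \<bullet> a) - (norm (\<Sum>b\<in>Basis. f b *\<^sub>R b))\<^sup>2)) \<partial>(\<Pi>\<^sub>M b\<in>Basis. lborel))"
    by (subst lborel_eq) (simp add: nn_integral_distr)
  also have "\<dots> = (\<integral>\<^sup>+f. (\<Prod>b\<in>Basis. ennreal (exp ((s * (b \<bullet> a)) * f b - (f b)\<^sup>2))) \<partial>(\<Pi>\<^sub>M b\<in>Basis. lborel))"
    by (intro nn_integral_cong) (simp add: rep prod_ennreal)
  also have "\<dots> = (\<Prod>b\<in>Basis. (\<integral>\<^sup>+y. ennreal (exp ((s * (b \<bullet> a)) * y - y\<^sup>2)) \<partial>lborel))"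
    by (rule P.product_nn_integral_prod) auto
  also have "\<dots> = (\<Prod>b\<in>Basis. ennreal (sqrt pi * exp ((s * (b \<bullet> a))\<^sup>2 / 4)))"
    by (simp add: gauss1d)
  also have "\<dots> = ennreal (\<Prod>b\<in>Basis. sqrt pi * exp ((s * (b \<bullet> a))\<^sup>2 / 4))"
    by (simp add: prod_ennreal)
  also have "(\<Prod>b\<in>Basis. sqrt pi * exp ((s * (b \<bullet> a))\<^sup>2 / 4)) = sqrt pi ^ DIM('a) * exp (s\<^sup>2 * (norm a)\<^sup>2 / 4)"
  proof -
    have na: "(norm a)\<^sup>2 = (\<Sum>b\<in>Basis. (b \<bullet> a)\<^sup>2)"
    proof -
      have "(norm a)\<^sup>2 = a \<bullet> a" by (rule power2_norm_eq_inner)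
      also have "\<dots> = (\<Sum>b\<in>Basis. (a \<bullet> b) * (a \<bullet> b))" by (rule euclidean_inner)
      also have "\<dots> = (\<Sum>b\<in>Basis. (b \<bullet> a)\<^sup>2)" by (auto intro!: sum.cong simp: inner_commute power2_eq_square)
      finally show ?thesis .
    qed
    have "(\<Sum>b\<in>Basis. (s * (b \<bullet> a))\<^sup>2 / 4) = (\<Sum>b\<in>Basis. s\<^sup>2 / 4 * (b \<bullet> a)\<^sup>2)"
      by (simp add: power_mult_distrib)
    also have "\<dots> = s\<^sup>2 / 4 * (\<Sum>b\<in>Basis. (b \<bullet> a)\<^sup>2)"
      by (rule sum_distrib_left[symmetric])
    also have "\<dots> = s\<^sup>2 * (norm a)\<^sup>2 / 4"
      by (simp add: na)
    finally have "(\<Sum>b\<in>Basis. (s * (b \<bullet> a))\<^sup>2 / 4) = s\<^sup>2 * (norm a)\<^sup>2 / 4" .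
    thus ?thesis by (simp add: prod.distrib exp_sum[symmetric])
  qed
  finally show ?thesis .
qed


(* ---- B3 ---- *)
definition Jv :: "nat \<Rightarrow> real" where
  "Jv p = (if even p then sqrt pi / 2 * (fact p / (2 ^ p * fact (p div 2))) else fact (p div 2) / 2)"

lemma Jv_hb: "has_bochner_integral lborel (\<lambda>x::real. indicator {0..} x *\<^sub>R (exp (- x\<^sup>2) * x ^ p)) (Jv p)"
proof (cases "even p")
  case True
  then obtain i where p: "p = 2 * i" by (auto elim: evenE)
  show ?thesis using gaussian_moment_even_pos[of i] True unfolding p Jv_def by simp
next
  case False
  then obtain i where p: "p = 2 * i + 1" by (auto elim: oddE)
  show ?thesis using gaussian_moment_odd_pos[of i] False unfolding p Jv_def by simp
qed

lemma Jv_pos: "Jv p > 0"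
  unfolding Jv_def by auto

lemma aux1:
  fixes x P G F c :: real
  assumes "x \<ge> 0" "P > 0" "G > 0"
  shows "c * (2 * (x + 1) * (2 * x + 1) * F / (4 * P * ((x + 1) * G))) = (2 * x + 1) / 2 * (c * (F / (P * G)))"
proof -
  have "2 * (x + 1) * (2 * x + 1) * F / (4 * P * ((x + 1) * G)) = ((x + 1) * (2 * (2 * x + 1) * F)) / ((x + 1) * (4 * P * G))"
    by (simp add: algebra_simps)
  also have "\<dots> = (2 * (2 * x + 1) * F) / (4 * P * G)"
    using assms by (intro mult_divide_mult_cancel_left) auto
  finally have E: "2 * (x + 1) * (2 * x + 1) * F / (4 * P * ((x + 1) * G)) = (2 * (2 * x + 1) * F) / (4 * P * G)" .
  show ?thesis unfolding E using assms by (simp add: field_simps)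
qed

lemma Jv_Suc2: "Jv (p + 2) = (real p + 1) / 2 * Jv p"
proof (cases "even p")
  case True
  then obtain i where p: "p = 2 * i" by (auto elim: evenE)
  have "p + 2 = 2 * Suc i" by (simp add: p)
  hence "Jv (p + 2) = sqrt pi / 2 * (fact (2 * Suc i) / (2 ^ (2 * Suc i) * fact (Suc i)))"
    unfolding Jv_def by simp
  also have "\<dots> = (real p + 1) / 2 * (sqrt pi / 2 * (fact (2 * i) / (2 ^ (2 * i) * fact i)))"
  proof -
    have f1: "fact (2 * Suc i) = 2 * (real i + 1) * (2 * real i + 1) * (fact (2 * i) :: real)"
      by (simp add: fact_Suc algebra_simps)
    have f2: "fact (Suc i) = (real i + 1) * (fact i :: real)" by (simp add: fact_Suc)
    have f3: "(2::real) ^ (2 * Suc i) = 4 * 2 ^ (2 * i)" by simp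
    have nz: "fact i \<noteq> (0::real)" "(2::real) ^ (2 * i) \<noteq> 0" "real i + 1 \<noteq> 0" by auto
    have "sqrt pi / 2 * (fact (2 * Suc i) / (2 ^ (2 * Suc i) * fact (Suc i)))
       = sqrt pi / 2 * (2 * (real i + 1) * (2 * real i + 1) * fact (2 * i) / (4 * 2 ^ (2 * i) * ((real i + 1) * fact i)))"
      unfolding f1 f2 f3 by simp
    also have "\<dots> = (2 * real i + 1) / 2 * (sqrt pi / 2 * (fact (2 * i) / (2 ^ (2 * i) * fact i)))"
      by (rule aux1) auto
    finally show ?thesis by (simp add: p)
  qed
  also have "\<dots> = (real p + 1) / 2 * Jv p" unfolding Jv_def p by simp
  finally show ?thesis .
next
  case False
  then obtain i where p: "p = 2 * i + 1" by (auto elim: oddE)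
  have "p + 2 = 2 * Suc i + 1" by (simp add: p)
  hence "Jv (p + 2) = fact (Suc i) / 2" unfolding Jv_def by simp
  also have "\<dots> = (real p + 1) / 2 * (fact i / 2)" unfolding p by (simp add: field_simps)
  also have "\<dots> = (real p + 1) / 2 * Jv p" unfolding Jv_def p by simp
  finally show ?thesis .
qed

lemma Jv_poch: "Jv (p + 2 * j) = Jv p * pochhammer ((real p + 1) / 2) j"
proof (induction j)
  case (Suc j)
  have "Jv (p + 2 * Suc j) = Jv ((p + 2 * j) + 2)" by (simp add: algebra_simps)
  also have "\<dots> = (real (p + 2 * j) + 1) / 2 * Jv (p + 2 * j)" by (rule Jv_Suc2)
  also have "\<dots> = Jv p * pochhammer ((real p + 1) / 2) (Suc j)"
    unfolding Suc pochhammer_Suc by (simp add: field_simps)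
  finally show ?case .
qed simp

lemma Jv_nn: "(\<integral>\<^sup>+r. indicator {0..} r * ennreal (r ^ p * exp (- r\<^sup>2)) \<partial>lborel) = ennreal (Jv p)"
proof -
  have "(\<integral>\<^sup>+r. indicator {0..} r * ennreal (r ^ p * exp (- r\<^sup>2)) \<partial>lborel)
      = (\<integral>\<^sup>+r. ennreal (indicator {0..} r *\<^sub>R (exp (- r\<^sup>2) * r ^ p)) \<partial>lborel)"
    by (intro nn_integral_cong) (auto simp: indicator_def mult.commute)
  also have "\<dots> = ennreal (Jv p)"
    using Jv_hb[of p]
    by (subst nn_integral_eq_integral) (auto simp: has_bochner_integral_iff indicator_def)
  finally show ?thesis .
qed

lemma powser_coeff_unique:
  fixes p q :: "nat \<Rightarrow> real"
  assumes sp: "\<And>z. summable (\<lambda>j. p j * z ^ j)" and sq: "\<And>z. summable (\<lambda>j. q j * z ^ j)"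
  assumes eq: "\<And>z. z > 0 \<Longrightarrow> (\<Sum>j. p j * z ^ j) = (\<Sum>j. q j * z ^ j)"
  shows "p = q"
proof -
  define d where "d j = p j - q j" for j
  have sd: "summable (\<lambda>j. d j * z ^ j)" for z
    unfolding d_def using summable_diff[OF sp[of z] sq[of z]] by (simp add: algebra_simps)
  have d0: "(\<Sum>j. d j * z ^ j) = 0" if "z > 0" for z
    unfolding d_def using suminf_diff[OF sp[of z] sq[of z]] eq[OF that] by (simp add: algebra_simps)
  have "d n = 0" for n
  proof (induction n rule: less_induct)
    case (less n)
    define g where "g z = (\<Sum>j. d (j + n) * z ^ j)" for z
    have sg: "summable (\<lambda>j. d (j + n) * z ^ j)" for z
    proof (cases "z = 0")
      case True thus ?thesis by simp
    next
      case False
      have "summable (\<lambda>j. d (j + n) * z ^ (j + n))"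
        using summable_ignore_initial_segment[OF sd[of z], of n] by simp
      hence "summable (\<lambda>j. (d (j + n) * z ^ (j + n)) * inverse (z ^ n))" by (rule summable_mult2)
      thus ?thesis using False by (simp add: power_add field_simps)
    qed
    have g0: "g z = 0" if z: "z > 0" for z
    proof -
      have "(\<lambda>j. d (j + n) * z ^ (j + n)) sums ((\<Sum>j. d j * z ^ j) - (\<Sum>i<n. d i * z ^ i))"
        using sums_split_initial_segment[OF summable_sums[OF sd[of z]], of n] by simp
      also have "(\<Sum>i<n. d i * z ^ i) = 0" using less by simp
      finally have "(\<lambda>j. d (j + n) * z ^ (j + n)) sums 0" using d0[OF z] by simp
      moreover have "(\<lambda>j. d (j + n) * z ^ (j + n)) sums (z ^ n * g z)"
        unfolding g_def using sums_mult[OF summable_sums[OF sg[of z]], of "z ^ n"]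
        by (simp add: power_add algebra_simps)
      ultimately have "z ^ n * g z = 0" using sums_unique2 by blast
      thus ?thesis using z by simp
    qed
    have "isCont g 0" unfolding g_def by (rule isCont_powser_converges_everywhere) (rule sg)
    hence "(g \<longlongrightarrow> g 0) (at_right 0)" by (simp add: isCont_def filterlim_at_split)
    moreover have "(g \<longlongrightarrow> 0) (at_right 0)"
    proof (rule tendsto_eventually)
      show "\<forall>\<^sub>F z in at_right 0. g z = 0"
        using eventually_at_right_less[of "0::real"] by eventually_elim (rule g0)
    qed
    ultimately have "g 0 = 0" using tendsto_unique[OF trivial_limit_at_right_real] by blast
    thus ?case unfolding g_def using powser_zero[of "\<lambda>j. d (j + n)"] by simp
  qed
  thus ?thesis by (auto simp: fun_eq_iff d_def)
qed


(* ---- B4 ---- *)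
lemma cosh_series: "(\<lambda>j. y ^ (2 * j) / fact (2 * j)) sums cosh (y::real)"
proof -
  have "(\<lambda>n. \<Sum>i\<in>{n * 2..<n * 2 + 2}. (if even i then y ^ i /\<^sub>R fact i else 0)) sums cosh y"
    by (rule sums_group[OF cosh_converges]) simp
  moreover have "(\<Sum>i\<in>{n * 2..<n * 2 + 2}. (if even i then y ^ i /\<^sub>R fact i else 0)) = y ^ (2 * n) / fact (2 * n)" for n
  proof -
    have "{n * 2..<n * 2 + 2} = {2 * n, Suc (2 * n)}" by auto
    thus ?thesis by (simp add: divide_inverse mult.commute)
  qed
  ultimately show ?thesis by simp
qed

lemma exp_series: "(\<lambda>j. z ^ j / fact j) sums exp (z::real)"
  using exp_converges[of z] by (simp add: divide_inverse mult.commute)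

lemma unit_proj_hom: "c > 0 \<Longrightarrow> (c *\<^sub>R x) /\<^sub>R norm (c *\<^sub>R x) = x /\<^sub>R norm (x::'a::real_normed_vector)"
  by (cases "x = 0") (auto simp: field_simps)

lemma unit_proj_inner_bound:
  assumes "norm (a::'a::real_inner) = 1"
  shows "\<bar>(x /\<^sub>R norm x) \<bullet> a\<bar> \<le> 1"
proof -
  have "\<bar>(x /\<^sub>R norm x) \<bullet> a\<bar> \<le> norm (x /\<^sub>R norm x) * norm a" by (rule Cauchy_Schwarz_ineq2)
  also have "\<dots> \<le> 1" using assms by (cases "x = 0") auto
  finally show ?thesis .
qed

lemma unit_proj_times_norm: "((x /\<^sub>R norm x) \<bullet> a) * norm x = x \<bullet> (a::'a::real_inner)"
  by (cases "x = 0") auto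

lemma pow2j_le1: "\<bar>y\<bar> \<le> 1 \<Longrightarrow> (y::real) ^ (2 * j) \<le> 1"
proof -
  assume "\<bar>y\<bar> \<le> 1"
  hence "y\<^sup>2 \<le> 1" by (simp add: abs_square_le_1)
  hence "(y\<^sup>2) ^ j \<le> 1" using power_le_one[of "y\<^sup>2" j] by simp
  thus ?thesis by (simp add: power_mult)
qed

lemma moments:
  fixes a :: "'a::euclidean_space"
  assumes na: "norm a = 1"
  shows "(\<integral>\<^sup>+x. ennreal (((x /\<^sub>R norm x) \<bullet> a) ^ (2 * j)) * indicator (ball 0 1) x \<partial>lborel)
       = ennreal (measure lborel (ball (0::'a) 1) * fact (2 * j) * gco (real DIM('a)) j)"
proof -
  define D where "D = DIM('a)"
  have D1: "D \<ge> 1" by (simp add: D_def DIM_positive Suc_leI)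
  define V where "V = measure lborel (ball (0::'a) 1)"
  define M where "M j = (\<integral>\<^sup>+x. ennreal (((x /\<^sub>R norm x) \<bullet> a) ^ (2 * j)) * indicator (ball 0 1) x \<partial>lborel)" for j
  have Vfin: "emeasure lborel (ball (0::'a) 1) = ennreal V"
    unfolding V_def using emeasure_lborel_ball_finite[of "0::'a" 1] by (simp add: emeasure_eq_ennreal_measure)
  have Mle: "M j \<le> ennreal V" for j
  proof -
    have "M j \<le> (\<integral>\<^sup>+x. 1 * indicator (ball (0::'a) 1) x \<partial>lborel)"
      unfolding M_def
    proof (rule nn_integral_mono)
      fix x :: 'a
      have "((x /\<^sub>R norm x) \<bullet> a) ^ (2 * j) \<le> 1"
        using unit_proj_inner_bound[OF na, of x]
        by (rule pow2j_le1)
      thus "ennreal (((x /\<^sub>R norm x) \<bullet> a) ^ (2 * j)) * indicator (ball 0 1) x \<le> 1 * indicator (ball 0 1) x"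
        by (auto simp: indicator_def)
    qed
    also have "\<dots> = ennreal V" using Vfin by simp
    finally show ?thesis .
  qed
  define m where "m j = enn2real (M j)" for j
  have Mm: "M j = ennreal (m j)" for j
  proof -
    have "M j < top" using Mle[of j] by (rule le_less_trans) simp
    thus ?thesis unfolding m_def by simp
  qed
  have m_nn: "m j \<ge> 0" for j by (simp add: m_def)
  (* moment via polar formula *)
  have mom: "(\<integral>\<^sup>+x. ennreal ((x \<bullet> a) ^ (2 * j) * exp (- (norm x)\<^sup>2)) \<partial>lborel)
       = M j * ennreal (real D * Jv (D - 1 + 2 * j))" for j
  proof -
    have "(\<integral>\<^sup>+x. ennreal ((x \<bullet> a) ^ (2 * j) * exp (- (norm x)\<^sup>2)) \<partial>lborel)
        = (\<integral>\<^sup>+x. ennreal (((x /\<^sub>R norm x) \<bullet> a) ^ (2 * j)) * ennreal ((norm x) ^ (2 * j) * exp (- (norm x)\<^sup>2)) \<partial>lborel)"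
    proof (intro nn_integral_cong)
      fix x :: 'a
      have "(x \<bullet> a) ^ (2 * j) = ((x /\<^sub>R norm x) \<bullet> a) ^ (2 * j) * (norm x) ^ (2 * j)"
        by (simp only: power_mult_distrib[symmetric] unit_proj_times_norm)
      moreover have "((x /\<^sub>R norm x) \<bullet> a) ^ (2 * j) \<ge> 0" by (simp add: power_mult)
      ultimately show "ennreal ((x \<bullet> a) ^ (2 * j) * exp (- (norm x)\<^sup>2))
          = ennreal (((x /\<^sub>R norm x) \<bullet> a) ^ (2 * j)) * ennreal ((norm x) ^ (2 * j) * exp (- (norm x)\<^sup>2))"
        by (simp add: ennreal_mult[symmetric] mult.assoc)
    qed
    also have "\<dots> = M j * (\<integral>\<^sup>+r. ennreal (real DIM('a) * r ^ (DIM('a) - 1)) * indicator {0..} r * ennreal (r ^ (2 * j) * exp (- r\<^sup>2)) \<partial>lborel)"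
      unfolding M_def
    proof (rule polar_formula[where Hb=1])
      show "(\<lambda>x::'a. ennreal (((x /\<^sub>R norm x) \<bullet> a) ^ (2 * j))) \<in> borel_measurable borel" by measurable
      show "(\<lambda>r. ennreal (r ^ (2 * j) * exp (- r\<^sup>2))) \<in> borel_measurable borel" by measurable
      fix c :: real and x :: 'a assume "c > 0"
      thus "ennreal (((c *\<^sub>R x /\<^sub>R norm (c *\<^sub>R x)) \<bullet> a) ^ (2 * j)) = ennreal (((x /\<^sub>R norm x) \<bullet> a) ^ (2 * j))"
        by (simp only: unit_proj_hom)
    next
      fix x :: 'a
      show "ennreal (((x /\<^sub>R norm x) \<bullet> a) ^ (2 * j)) \<le> ennreal 1"
        using unit_proj_inner_bound[OF na, of x]
        by (intro ennreal_leI pow2j_le1)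
    qed
    also have "(\<integral>\<^sup>+r. ennreal (real DIM('a) * r ^ (DIM('a) - 1)) * indicator {0..} r * ennreal (r ^ (2 * j) * exp (- r\<^sup>2)) \<partial>lborel)
        = (\<integral>\<^sup>+r. ennreal (real D) * (indicator {0..} r * ennreal (r ^ (D - 1 + 2 * j) * exp (- r\<^sup>2))) \<partial>lborel)"
    proof (intro nn_integral_cong)
      fix r :: real
      show "ennreal (real DIM('a) * r ^ (DIM('a) - 1)) * indicator {0..} r * ennreal (r ^ (2 * j) * exp (- r\<^sup>2))
          = ennreal (real D) * (indicator {0..} r * ennreal (r ^ (D - 1 + 2 * j) * exp (- r\<^sup>2)))"
        unfolding D_def power_add
        by (cases "r \<ge> 0") (auto simp: indicator_def ennreal_mult[symmetric] mult_ac)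
    qed
    also have "\<dots> = ennreal (real D) * ennreal (Jv (D - 1 + 2 * j))"
      by (subst nn_integral_cmult) (auto simp: Jv_nn)
    finally show ?thesis using Jv_pos[of "D - 1 + 2 * j"] by (simp add: ennreal_mult)
  qed
  (* the Gaussian cosh integral *)
  have coshI: "(\<integral>\<^sup>+x. ennreal (cosh (s * (x \<bullet> a)) * exp (- (norm x)\<^sup>2)) \<partial>lborel)
      = ennreal (sqrt pi ^ D * exp (s\<^sup>2 / 4))" for s
  proof -
    have half: "(\<integral>\<^sup>+x. ennreal (exp (t * (x \<bullet> a) - (norm x)\<^sup>2) / 2) \<partial>lborel)
        = ennreal (sqrt pi ^ D * exp (s\<^sup>2 / 4) / 2)" if t: "t\<^sup>2 = s\<^sup>2" for t
    proof -
      have "(\<integral>\<^sup>+x. ennreal (exp (t * (x \<bullet> a) - (norm x)\<^sup>2) / 2) \<partial>lborel)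
          = (\<integral>\<^sup>+x. ennreal (1/2) * ennreal (exp (t * (x \<bullet> a) - (norm x)\<^sup>2)) \<partial>lborel)"
        by (intro nn_integral_cong, subst ennreal_mult[symmetric]) auto
      also have "\<dots> = ennreal (1/2) * (\<integral>\<^sup>+x. ennreal (exp (t * (x \<bullet> a) - (norm x)\<^sup>2)) \<partial>lborel)"
        by (rule nn_integral_cmult) measurable
      also have "\<dots> = ennreal (1/2) * ennreal (sqrt pi ^ D * exp (s\<^sup>2 / 4))"
        by (simp add: gauss_mgf na D_def t)
      also have "\<dots> = ennreal (sqrt pi ^ D * exp (s\<^sup>2 / 4) / 2)"
        by (subst ennreal_mult[symmetric]) auto
      finally show ?thesis .
    qed
    have "(\<integral>\<^sup>+x. ennreal (cosh (s * (x \<bullet> a)) * exp (- (norm x)\<^sup>2)) \<partial>lborel)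
       = (\<integral>\<^sup>+x. ennreal (exp (s * (x \<bullet> a) - (norm x)\<^sup>2) / 2) + ennreal (exp ((- s) * (x \<bullet> a) - (norm x)\<^sup>2) / 2) \<partial>lborel)"
    proof (intro nn_integral_cong)
      fix x :: 'a
      have "cosh (s * (x \<bullet> a)) * exp (- (norm x)\<^sup>2) = exp (s * (x \<bullet> a) - (norm x)\<^sup>2) / 2 + exp ((- s) * (x \<bullet> a) - (norm x)\<^sup>2) / 2"
        by (simp add: cosh_def exp_diff exp_minus field_simps)
      thus "ennreal (cosh (s * (x \<bullet> a)) * exp (- (norm x)\<^sup>2)) = ennreal (exp (s * (x \<bullet> a) - (norm x)\<^sup>2) / 2) + ennreal (exp ((- s) * (x \<bullet> a) - (norm x)\<^sup>2) / 2)"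
        by (simp add: ennreal_plus[symmetric] del: ennreal_plus)
    qed
    also have "\<dots> = (\<integral>\<^sup>+x. ennreal (exp (s * (x \<bullet> a) - (norm x)\<^sup>2) / 2) \<partial>lborel) + (\<integral>\<^sup>+x. ennreal (exp ((- s) * (x \<bullet> a) - (norm x)\<^sup>2) / 2) \<partial>lborel)"
      by (rule nn_integral_add) measurable
    also have "\<dots> = ennreal (sqrt pi ^ D * exp (s\<^sup>2 / 4) / 2) + ennreal (sqrt pi ^ D * exp (s\<^sup>2 / 4) / 2)"
      using half[of s] half[of "- s"] by simp
    also have "\<dots> = ennreal (sqrt pi ^ D * exp (s\<^sup>2 / 4))"
      by (simp add: ennreal_plus[symmetric] del: ennreal_plus)
    finally show ?thesis .
  qed
  define p where "p j = m j * real D * Jv (D - 1 + 2 * j) / fact (2 * j)" for j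
  define q where "q j = sqrt pi ^ D / (4 ^ j * fact j)" for j
  have p_nn: "p j \<ge> 0" for j unfolding p_def using m_nn[of j] Jv_pos[of "D - 1 + 2 * j"]
    by (intro divide_nonneg_pos mult_nonneg_nonneg) auto
  have psums: "(\<lambda>j. p j * (s\<^sup>2) ^ j) sums (sqrt pi ^ D * exp (s\<^sup>2 / 4))" for s
  proof -
    have "(\<integral>\<^sup>+x. ennreal (cosh (s * (x \<bullet> a)) * exp (- (norm x)\<^sup>2)) \<partial>lborel)
        = (\<integral>\<^sup>+x. (\<Sum>j. ennreal ((s * (x \<bullet> a)) ^ (2 * j) / fact (2 * j) * exp (- (norm x)\<^sup>2))) \<partial>lborel)"
    proof (intro nn_integral_cong)
      fix x :: 'a
      have "(\<lambda>j. (s * (x \<bullet> a)) ^ (2 * j) / fact (2 * j) * exp (- (norm x)\<^sup>2)) sums (cosh (s * (x \<bullet> a)) * exp (- (norm x)\<^sup>2))"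
        by (rule sums_mult2[OF cosh_series])
      thus "ennreal (cosh (s * (x \<bullet> a)) * exp (- (norm x)\<^sup>2)) = (\<Sum>j. ennreal ((s * (x \<bullet> a)) ^ (2 * j) / fact (2 * j) * exp (- (norm x)\<^sup>2)))"
        by (intro suminf_ennreal_eq[symmetric]) (auto simp: power_mult)
    qed
    also have "\<dots> = (\<Sum>j. (\<integral>\<^sup>+x. ennreal ((s * (x \<bullet> a)) ^ (2 * j) / fact (2 * j) * exp (- (norm x)\<^sup>2)) \<partial>lborel))"
      by (rule nn_integral_suminf) measurable
    also have "\<dots> = (\<Sum>j. ennreal (p j * (s\<^sup>2) ^ j))"
    proof (intro suminf_cong)
      fix j
      have "(\<integral>\<^sup>+x. ennreal ((s * (x \<bullet> a)) ^ (2 * j) / fact (2 * j) * exp (- (norm x)\<^sup>2)) \<partial>lborel)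
          = (\<integral>\<^sup>+x. ennreal (s ^ (2 * j) / fact (2 * j)) * ennreal ((x \<bullet> a) ^ (2 * j) * exp (- (norm x)\<^sup>2)) \<partial>lborel)"
        by (intro nn_integral_cong) (simp add: ennreal_mult[symmetric] power_mult_distrib power_mult mult_ac)
      also have "\<dots> = ennreal (s ^ (2 * j) / fact (2 * j)) * (M j * ennreal (real D * Jv (D - 1 + 2 * j)))"
        by (subst nn_integral_cmult) (auto simp: mom)
      also have "\<dots> = ennreal (p j * (s\<^sup>2) ^ j)"
        unfolding Mm p_def using m_nn[of j] Jv_pos[of "D - 1 + 2 * j"] power_mult[of s 2 j] power_mult[of s j 2]
        by (simp add: ennreal_mult[symmetric] mult_ac)
      finally show "(\<integral>\<^sup>+x. ennreal ((s * (x \<bullet> a)) ^ (2 * j) / fact (2 * j) * exp (- (norm x)\<^sup>2)) \<partial>lborel) = ennreal (p j * (s\<^sup>2) ^ j)" .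
    qed
    finally have "(\<Sum>j. ennreal (p j * (s\<^sup>2) ^ j)) = ennreal (sqrt pi ^ D * exp (s\<^sup>2 / 4))"
      using coshI[of s] by simp
    hence "(\<lambda>j. ennreal (p j * (s\<^sup>2) ^ j)) sums ennreal (sqrt pi ^ D * exp (s\<^sup>2 / 4))"
      by (metis summable_sums summableI)
    thus ?thesis by (subst (asm) sums_ennreal) (auto intro!: mult_nonneg_nonneg p_nn)
  qed
  have qsums: "(\<lambda>j. q j * z ^ j) sums (sqrt pi ^ D * exp (z / 4))" for z
  proof -
    have "(\<lambda>j. sqrt pi ^ D * ((z / 4) ^ j / fact j)) sums (sqrt pi ^ D * exp (z / 4))"
      by (rule sums_mult[OF exp_series])
    thus ?thesis by (simp add: q_def power_divide field_simps)
  qed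
  have "p = q"
  proof (rule powser_coeff_unique)
    fix z :: real
    show "summable (\<lambda>j. q j * z ^ j)" using qsums by (rule sums_summable)
    have "summable (\<lambda>j. p j * \<bar>z\<bar> ^ j)"
      using psums[of "sqrt \<bar>z\<bar>"] by (simp add: sums_summable)
    hence "summable (\<lambda>j. norm (p j * z ^ j))" using p_nn by (simp add: abs_mult power_abs)
    thus "summable (\<lambda>j. p j * z ^ j)" by (rule summable_norm_cancel)
  next
    fix z :: real assume z: "z > 0"
    have "(\<lambda>j. p j * z ^ j) sums (sqrt pi ^ D * exp (z / 4))"
      using psums[of "sqrt z"] z by simp
    thus "(\<Sum>j. p j * z ^ j) = (\<Sum>j. q j * z ^ j)" using qsums[of z] by (simp add: sums_iff)
  qed
  have m0: "m 0 = V"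
  proof -
    have "M 0 = (\<integral>\<^sup>+x. 1 * indicator (ball (0::'a) 1) x \<partial>lborel)" by (simp add: M_def)
    also have "\<dots> = ennreal V" using Vfin by simp
    finally show ?thesis unfolding m_def by (simp add: V_def)
  qed
  have pq0: "V * real D * Jv (D - 1) = sqrt pi ^ D"
    using fun_cong[OF \<open>p = q\<close>, of 0] by (simp add: p_def q_def m0)
  have "m j * real D * Jv (D - 1 + 2 * j) / fact (2 * j) = sqrt pi ^ D / (4 ^ j * fact j)"
    using fun_cong[OF \<open>p = q\<close>, of j] by (simp add: p_def q_def)
  also have "Jv (D - 1 + 2 * j) = Jv (D - 1) * pochhammer (real D / 2) j"
    using Jv_poch[of "D - 1" j] D1 by (simp add: of_nat_diff)
  finally have "m j * real D * (Jv (D - 1) * pochhammer (real D / 2) j) / fact (2 * j)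
      = V * real D * Jv (D - 1) / (4 ^ j * fact j)" unfolding pq0 .
  hence "m j = V * fact (2 * j) / (4 ^ j * fact j * pochhammer (real D / 2) j)"
    using Jv_pos[of "D - 1"] D1 pochhammer_pos[of "real D / 2" j]
    by (simp add: field_simps)
  hence "m j = V * fact (2 * j) * gco (real D) j" by (simp add: gco_def)
  thus ?thesis unfolding M_def[symmetric] Mm V_def D_def by simp
qed


(* ---- B5 ---- *)
lemma ball_borel_sets[measurable]: "ball (c::'a::metric_space) r \<in> sets borel"
  by simp

lemma ball_lborel_sets[measurable]: "ball (c::'a::euclidean_space) r \<in> sets lborel"
  by simp

lemma borel_measurable_cosh[measurable (raw)]:
  "f \<in> borel_measurable M \<Longrightarrow> (\<lambda>x. cosh (f x :: real)) \<in> borel_measurable M"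
proof -
  assume f: "f \<in> borel_measurable M"
  have "(cosh :: real \<Rightarrow> real) \<in> borel_measurable borel"
    by (intro borel_measurable_continuous_onI continuous_intros)
  from measurable_compose[OF f this] show ?thesis by (simp add: o_def)
qed

lemma nn_integral_reflect:
  fixes f :: "'a::euclidean_space \<Rightarrow> ennreal"
  assumes [measurable]: "f \<in> borel_measurable borel"
  shows "(\<integral>\<^sup>+x. f x \<partial>lborel) = (\<integral>\<^sup>+x. f (- x) \<partial>lborel)"
proof -
  have L: "(lborel::'a measure) = density (distr lborel borel (\<lambda>x. 0 + (-1) *\<^sub>R x)) (\<lambda>_. 1)"
    using lborel_affine[of "-1::real" "0::'a"] by simp
  have "(\<integral>\<^sup>+x. f x \<partial>lborel) = (\<integral>\<^sup>+x. f x \<partial>(density (distr lborel borel (\<lambda>x. 0 + (-1) *\<^sub>R x)) (\<lambda>_. 1)))"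
    by (subst L[symmetric]) (rule refl)
  also have "\<dots> = (\<integral>\<^sup>+x. f x \<partial>(distr lborel borel (\<lambda>x. 0 + (-1) *\<^sub>R x)))"
    by (simp add: density_1)
  also have "\<dots> = (\<integral>\<^sup>+x. f (0 + (-1) *\<^sub>R x) \<partial>lborel)"
    by (rule nn_integral_distr) auto
  finally show ?thesis by simp
qed

lemma ball_cball_nn_integral:
  fixes f :: "'a::euclidean_space \<Rightarrow> ennreal"
  shows "(\<integral>\<^sup>+x. f x * indicator (cball 0 1) x \<partial>lborel) = (\<integral>\<^sup>+x. f x * indicator (ball 0 1) x \<partial>lborel)"
proof (rule nn_integral_cong_AE)
  have "sphere (0::'a) 1 \<in> null_sets lborel"
    using negligible_sphere[of "0::'a" 1]
    by (auto simp: null_sets_completion_iff negligible_iff_null_sets negligible_convex_frontier)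
  hence "AE x in lborel. x \<notin> sphere (0::'a) 1" by (rule AE_not_in)
  thus "AE x in lborel. f x * indicator (cball 0 1) x = f x * indicator (ball 0 1) x"
    by eventually_elim (auto simp: indicator_def)
qed

lemma sphere_unif_nn:
  fixes g :: "real ^ 'k::finite \<Rightarrow> ennreal"
  assumes [measurable]: "g \<in> borel_measurable borel"
  shows "(\<integral>\<^sup>+u. g u \<partial>sphere_unif TYPE('k)) =
     (\<integral>\<^sup>+x. g (x /\<^sub>R norm x) * indicator (ball 0 1) x \<partial>lborel) / ennreal (measure lborel (ball (0::real^'k) 1))"
proof -
  have "(\<integral>\<^sup>+u. g u \<partial>sphere_unif TYPE('k)) = (\<integral>\<^sup>+x. g (x /\<^sub>R norm x) \<partial>uniform_measure lborel (cball 0 1))"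
    unfolding sphere_unif_def by (rule nn_integral_distr) auto
  also have "\<dots> = (\<integral>\<^sup>+x. g (x /\<^sub>R norm x) * indicator (cball 0 1) x \<partial>lborel) / emeasure lborel (cball (0::real^'k) 1)"
    by (rule nn_integral_uniform_measure) auto
  also have "emeasure lborel (cball (0::real^'k) 1) = emeasure lborel (ball (0::real^'k) 1)"
    using ball_cball_nn_integral[of "\<lambda>_. 1"] by simp
  also have "\<dots> = ennreal (measure lborel (ball (0::real^'k) 1))"
    using emeasure_lborel_ball_finite[of "0::real^'k" 1] by (simp add: emeasure_eq_ennreal_measure)
  finally show ?thesis by (simp add: ball_cball_nn_integral)
qed

lemma sphere_mgf_unit:
  fixes a :: "real ^ 'k::finite"
  assumes na: "norm a = 1"
  shows "(\<integral>\<^sup>+u. ennreal (exp (t * (u \<bullet> a))) \<partial>sphere_unif TYPE('k)) = ennreal (GG (real CARD('k)) (t\<^sup>2))"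
proof -
  define V where "V = measure lborel (ball (0::real^'k) 1)"
  have Vpos: "V > 0" unfolding V_def by (rule content_ball_pos) simp
  define k where "k = real CARD('k)"
  have k1: "k \<ge> 1" by (simp add: k_def)
  define E where "E s = (\<integral>\<^sup>+x. ennreal (exp (s * ((x /\<^sub>R norm x) \<bullet> a))) * indicator (ball 0 1) x \<partial>lborel)" for s
  have sym: "E t = E (- t)"
  proof -
    have "E t = (\<integral>\<^sup>+x. ennreal (exp (t * ((- x /\<^sub>R norm (- x)) \<bullet> a))) * indicator (ball 0 1) (- x) \<partial>lborel)"
      unfolding E_def by (rule nn_integral_reflect) measurable
    also have "\<dots> = E (- t)" unfolding E_def
      by (intro nn_integral_cong) (simp add: indicator_def)
    finally show ?thesis .
  qed
  define C where "C = (\<integral>\<^sup>+x. ennreal (cosh (t * ((x /\<^sub>R norm x) \<bullet> a))) * indicator (ball 0 1) x \<partial>lborel)"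
  have "E t + E (- t) = (\<integral>\<^sup>+x. ennreal (exp (t * ((x /\<^sub>R norm x) \<bullet> a))) * indicator (ball 0 1) x
        + ennreal (exp ((- t) * ((x /\<^sub>R norm x) \<bullet> a))) * indicator (ball 0 1) x \<partial>lborel)"
    unfolding E_def by (rule nn_integral_add[symmetric]) measurable
  also have "\<dots> = (\<integral>\<^sup>+x. 2 * (ennreal (cosh (t * ((x /\<^sub>R norm x) \<bullet> a))) * indicator (ball 0 1) x) \<partial>lborel)"
  proof (intro nn_integral_cong)
    fix x :: "real^'k"
    have "exp (t * ((x /\<^sub>R norm x) \<bullet> a)) + exp ((- t) * ((x /\<^sub>R norm x) \<bullet> a)) = 2 * cosh (t * ((x /\<^sub>R norm x) \<bullet> a))"
      by (simp add: cosh_def)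
    hence "ennreal (exp (t * ((x /\<^sub>R norm x) \<bullet> a))) + ennreal (exp ((- t) * ((x /\<^sub>R norm x) \<bullet> a)))
        = 2 * ennreal (cosh (t * ((x /\<^sub>R norm x) \<bullet> a)))"
    proof -
      let ?y = "t * ((x /\<^sub>R norm x) \<bullet> a)"
      have cp: "0 \<le> cosh ?y" by (simp add: cosh_def add_nonneg_nonneg)
      have "ennreal (exp ?y) + ennreal (exp ((- t) * ((x /\<^sub>R norm x) \<bullet> a))) = ennreal (exp ?y + exp ((- t) * ((x /\<^sub>R norm x) \<bullet> a)))"
        by (rule ennreal_plus[symmetric]) auto
      also have "\<dots> = ennreal (2 * cosh ?y)" using \<open>exp ?y + _ = _\<close> by simp
      also have "\<dots> = ennreal 2 * ennreal (cosh ?y)" using cp by (intro ennreal_mult) simp_all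
      finally show ?thesis by simp
    qed
    thus "ennreal (exp (t * ((x /\<^sub>R norm x) \<bullet> a))) * indicator (ball 0 1) x
        + ennreal (exp ((- t) * ((x /\<^sub>R norm x) \<bullet> a))) * indicator (ball 0 1) x
        = 2 * (ennreal (cosh (t * ((x /\<^sub>R norm x) \<bullet> a))) * indicator (ball 0 1) x)"
      by (simp add: distrib_right[symmetric] mult.assoc)
  qed
  also have "\<dots> = 2 * C" unfolding C_def by (rule nn_integral_cmult) measurable
  finally have "2 * E t = 2 * C" using sym by (simp add: mult_2)
  hence EC: "E t = C" by (simp add: ennreal_mult_cancel_left)
  have "C = (\<integral>\<^sup>+x. (\<Sum>j. ennreal (t ^ (2 * j) / fact (2 * j)) * (ennreal (((x /\<^sub>R norm x) \<bullet> a) ^ (2 * j)) * indicator (ball 0 1) x)) \<partial>lborel)"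
    unfolding C_def
  proof (intro nn_integral_cong)
    fix x :: "real^'k"
    have "(\<lambda>j. (t * ((x /\<^sub>R norm x) \<bullet> a)) ^ (2 * j) / fact (2 * j)) sums cosh (t * ((x /\<^sub>R norm x) \<bullet> a))"
      by (rule cosh_series)
    hence "ennreal (cosh (t * ((x /\<^sub>R norm x) \<bullet> a))) = (\<Sum>j. ennreal ((t * ((x /\<^sub>R norm x) \<bullet> a)) ^ (2 * j) / fact (2 * j)))"
      by (intro suminf_ennreal_eq[symmetric]) (auto simp: power_mult)
    also have "\<dots> = (\<Sum>j. ennreal (t ^ (2 * j) / fact (2 * j)) * ennreal (((x /\<^sub>R norm x) \<bullet> a) ^ (2 * j)))"
      by (intro suminf_cong) (simp add: ennreal_mult[symmetric] power_mult_distrib power_mult)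
    finally show "ennreal (cosh (t * ((x /\<^sub>R norm x) \<bullet> a))) * indicator (ball 0 1) x =
        (\<Sum>j. ennreal (t ^ (2 * j) / fact (2 * j)) * (ennreal (((x /\<^sub>R norm x) \<bullet> a) ^ (2 * j)) * indicator (ball 0 1) x))"
      by (simp only: mult.assoc[symmetric] ennreal_suminf_multc)
  qed
  also have "\<dots> = (\<Sum>j. (\<integral>\<^sup>+x. ennreal (t ^ (2 * j) / fact (2 * j)) * (ennreal (((x /\<^sub>R norm x) \<bullet> a) ^ (2 * j)) * indicator (ball 0 1) x) \<partial>lborel))"
    by (rule nn_integral_suminf) measurable
  also have "\<dots> = (\<Sum>j. ennreal (V * gco k j * (t\<^sup>2) ^ j))"
  proof (intro suminf_cong)
    fix j
    have "(\<integral>\<^sup>+x. ennreal (t ^ (2 * j) / fact (2 * j)) * (ennreal (((x /\<^sub>R norm x) \<bullet> a) ^ (2 * j)) * indicator (ball 0 1) x) \<partial>lborel)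
        = ennreal (t ^ (2 * j) / fact (2 * j)) * (\<integral>\<^sup>+x. ennreal (((x /\<^sub>R norm x) \<bullet> a) ^ (2 * j)) * indicator (ball 0 1) x \<partial>lborel)"
      by (rule nn_integral_cmult) measurable
    also have "\<dots> = ennreal (t ^ (2 * j) / fact (2 * j)) * ennreal (V * fact (2 * j) * gco k j)"
      using moments[OF na, of j] by (simp add: V_def k_def)
    also have "\<dots> = ennreal (V * gco k j * (t\<^sup>2) ^ j)"
      using Vpos gco_pos[OF k1, of j] power_mult[of t 2 j]
      by (simp add: ennreal_mult[symmetric] power_mult field_simps)
    finally show "(\<integral>\<^sup>+x. ennreal (t ^ (2 * j) / fact (2 * j)) * (ennreal (((x /\<^sub>R norm x) \<bullet> a) ^ (2 * j)) * indicator (ball 0 1) x) \<partial>lborel)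
        = ennreal (V * gco k j * (t\<^sup>2) ^ j)" .
  qed
  also have "\<dots> = ennreal (V * GG k (t\<^sup>2))"
  proof (rule suminf_ennreal_eq)
    show "0 \<le> V * gco k j * (t\<^sup>2) ^ j" for j using Vpos gco_pos[OF k1, of j] by simp
    have "(\<lambda>j. gco k j * (t\<^sup>2) ^ j) sums GG k (t\<^sup>2)"
      unfolding GG_def using gco_summable[OF k1] by (simp add: summable_sums)
    from sums_mult[OF this, of V] show "(\<lambda>j. V * gco k j * (t\<^sup>2) ^ j) sums (V * GG k (t\<^sup>2))"
      by (simp add: mult.assoc)
  qed
  finally have C: "C = ennreal (V * GG k (t\<^sup>2))" .
  have "(\<integral>\<^sup>+u. ennreal (exp (t * (u \<bullet> a))) \<partial>sphere_unif TYPE('k)) = E t / ennreal V"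
    unfolding E_def V_def by (rule sphere_unif_nn) measurable
  also have "\<dots> = ennreal (V * GG k (t\<^sup>2)) / ennreal V" using EC C by simp
  also have "\<dots> = ennreal (GG k (t\<^sup>2))"
    using Vpos GG_ge1[OF k1, of "t\<^sup>2"] by (simp add: divide_ennreal)
  finally show ?thesis by (simp add: k_def)
qed


(* ---- C1 ---- *)
lemma sphere_unif_prob: "prob_space (sphere_unif TYPE('k::finite))"
proof -
  have "emeasure lborel (cball (0::real^'k) 1) \<noteq> 0"
  proof -
    have "measure lborel (cball (0::real^'k) 1) > 0"
      using content_ball_pos[of 1 "0::real^'k"] measure_mono_fmeasurable[of "ball (0::real^'k) 1" "cball 0 1" lborel]
      by (auto simp: fmeasurable_def emeasure_lborel_cball_finite emeasure_lborel_ball_finite)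
    thus ?thesis by (metis measure_def enn2real_0 less_irrefl)
  qed
  moreover have "emeasure lborel (cball (0::real^'k) 1) \<noteq> \<infinity>"
    using emeasure_lborel_cball_finite[of "0::real^'k" 1] by simp
  ultimately have "prob_space (uniform_measure lborel (cball (0::real^'k) 1))"
    by (rule prob_space_uniform_measure)
  thus ?thesis unfolding sphere_unif_def by (rule prob_space.prob_space_distr) simp
qed

lemma sets_sphere_unif[simp, measurable_cong]: "sets (sphere_unif TYPE('k::finite)) = sets borel"
  by (simp add: sphere_unif_def)

lemma sphere_unif_AE_norm: "AE u in sphere_unif TYPE('k::finite). norm u \<le> 1"
proof -
  have "AE x in uniform_measure lborel (cball (0::real^'k) 1). norm (x /\<^sub>R norm x) \<le> 1"
  proof (intro AE_I2)
    fix x :: "real^'k" show "norm (x /\<^sub>R norm x) \<le> 1" by (cases "x = 0") auto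
  qed
  thus ?thesis unfolding sphere_unif_def by (subst AE_distr_iff) auto
qed

lemma sphere_mgf:
  fixes w :: "real ^ 'k::finite"
  shows "(\<integral>\<^sup>+u. ennreal (exp (u \<bullet> w)) \<partial>sphere_unif TYPE('k)) = ennreal (GG (real CARD('k)) ((norm w)\<^sup>2))"
proof (cases "w = 0")
  case True
  interpret prob_space "sphere_unif TYPE('k)" by (rule sphere_unif_prob)
  have "(\<integral>\<^sup>+u. ennreal (exp (u \<bullet> w)) \<partial>sphere_unif TYPE('k)) = (\<integral>\<^sup>+u. 1 \<partial>sphere_unif TYPE('k))"
    using True by simp
  also have "\<dots> = 1" by (simp add: emeasure_space_1)
  finally show ?thesis using True by (simp add: GG_0)
next
  case False
  define a where "a = w /\<^sub>R norm w"
  have na: "norm a = 1" using False by (simp add: a_def)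
  have "(\<lambda>u. u \<bullet> w) = (\<lambda>u. norm w * (u \<bullet> a))"
    using False by (auto simp: a_def fun_eq_iff)
  hence "(\<integral>\<^sup>+u. ennreal (exp (u \<bullet> w)) \<partial>sphere_unif TYPE('k)) = (\<integral>\<^sup>+u. ennreal (exp (norm w * (u \<bullet> a))) \<partial>sphere_unif TYPE('k))"
    by metis
  also have "\<dots> = ennreal (GG (real CARD('k)) ((norm w)\<^sup>2))"
    by (rule sphere_mgf_unit[OF na])
  finally show ?thesis .
qed

lemma sphere_mgf_lower:
  fixes w :: "real ^ 'k::finite"
  assumes "0 < eps" "eps < 1"
  shows "(\<integral>\<^sup>+u. ennreal (exp (u \<bullet> w)) \<partial>sphere_unif TYPE('k))
      \<ge> ennreal ((1 - eps\<^sup>2) powr (real CARD('k) / 2) * exp (eps * norm w))"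
  unfolding sphere_mgf
  by (rule ennreal_leI) (rule GG_lower[OF _ norm_ge_zero assms], simp)


(* ---- C ---- *)
theorem lemma2:
  fixes A :: "real ^ 'n ^ 'm" and lam :: real and eps :: real
  assumes "0 < eps" and "eps < 1"
  shows "Phi (lam *\<^sub>R A) \<ge>
           (1 - eps\<^sup>2) powr ((real CARD('m) + real CARD('n)) / 2)
             * exp (eps\<^sup>2 * onorm (\<lambda>v. (lam *\<^sub>R A) *v v))"
proof -
  define M where "M = lam *\<^sub>R A"
  define Cm where "Cm = (1 - eps\<^sup>2) powr (real CARD('m) / 2)"
  define Cn where "Cn = (1 - eps\<^sup>2) powr (real CARD('n) / 2)"
  have pos2: "1 - eps\<^sup>2 > 0" using assms abs_square_less_1[of eps] by simp
  have Cm_pos: "Cm > 0" and Cn_pos: "Cn > 0" using pos2 by (simp_all add: Cm_def Cn_def)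
  have C_eq: "(1 - eps\<^sup>2) powr ((real CARD('m) + real CARD('n)) / 2) = Cm * Cn"
    unfolding Cm_def Cn_def by (simp add: powr_add[symmetric] add_divide_distrib)
  interpret Sm: prob_space "sphere_unif TYPE('m)" by (rule sphere_unif_prob)
  interpret Sn: prob_space "sphere_unif TYPE('n)" by (rule sphere_unif_prob)
  define f where "f = (\<lambda>(u :: real^'m, v :: real^'n). exp (u \<bullet> (M *v v)))"
  have f_meas: "f \<in> borel_measurable (sphere_unif TYPE('m) \<Otimes>\<^sub>M sphere_unif TYPE('n))"
  proof -
    have c: "continuous_on UNIV (\<lambda>x::((real^'m) \<times> (real^'n)). M *v snd x)"
      by (rule continuous_on_compose2[of UNIV "(*v) M" UNIV snd]) (auto intro: continuous_intros)
    have feq: "f = (\<lambda>p. exp (fst p \<bullet> (M *v snd p)))" by (simp add: f_def case_prod_beta')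
    have "continuous_on UNIV (\<lambda>p::((real^'m) \<times> (real^'n)). exp (fst p \<bullet> (M *v snd p)))"
      by (intro continuous_on_exp continuous_on_inner continuous_on_fst c continuous_on_id)
    hence fb: "f \<in> borel_measurable borel" unfolding feq by (rule borel_measurable_continuous_onI)
    have "sets (sphere_unif TYPE('m) \<Otimes>\<^sub>M sphere_unif TYPE('n)) = sets (borel \<Otimes>\<^sub>M borel)"
      by (rule sets_pair_measure_cong) simp_all
    also have "(borel \<Otimes>\<^sub>M borel) = (borel :: ((real^'m) \<times> (real^'n)) measure)" by (rule borel_prod)
    finally have "sets (sphere_unif TYPE('m) \<Otimes>\<^sub>M sphere_unif TYPE('n)) = sets (borel :: ((real^'m) \<times> (real^'n)) measure)" .
    thus ?thesis by (subst measurable_cong_sets[OF _ refl]) (assumption, rule fb)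
  qed
  have Phi_eq: "Phi M = enn2real (\<integral>\<^sup>+p. ennreal (f p) \<partial>(sphere_unif TYPE('m) \<Otimes>\<^sub>M sphere_unif TYPE('n)))"
    unfolding Phi_def f_def[symmetric] by (rule integral_eq_nn_integral[OF f_meas]) (simp add: f_def split: prod.splits)
  have Tonelli: "(\<integral>\<^sup>+p. ennreal (f p) \<partial>(sphere_unif TYPE('m) \<Otimes>\<^sub>M sphere_unif TYPE('n)))
      = (\<integral>\<^sup>+u. (\<integral>\<^sup>+v. ennreal (f (u, v)) \<partial>sphere_unif TYPE('n)) \<partial>sphere_unif TYPE('m))"
    by (rule Sn.nn_integral_fst[symmetric]) (use f_meas in measurable)
  (* lower bound for every unit b *)
  have low: "(\<integral>\<^sup>+p. ennreal (f p) \<partial>(sphere_unif TYPE('m) \<Otimes>\<^sub>M sphere_unif TYPE('n)))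
      \<ge> ennreal (Cm * Cn * exp (eps\<^sup>2 * norm (M *v b)))" if b: "norm b = 1" for b :: "real^'n"
  proof -
    have inner: "(\<integral>\<^sup>+v. ennreal (f (u, v)) \<partial>sphere_unif TYPE('n)) \<ge> ennreal (Cn * exp (eps * (u \<bullet> (M *v b))))" for u
    proof -
      have eq: "u \<bullet> (M *v v) = v \<bullet> (transpose M *v u)" for v
      proof -
        have "u \<bullet> (M *v v) = (u v* M) \<bullet> v" by (rule dot_lmul_matrix[symmetric])
        also have "u v* M = transpose M *v u" by simp
        finally show ?thesis by (simp add: inner_commute)
      qed
      have I1: "(\<integral>\<^sup>+v. ennreal (f (u, v)) \<partial>sphere_unif TYPE('n)) = (\<integral>\<^sup>+v. ennreal (exp (v \<bullet> (transpose M *v u))) \<partial>sphere_unif TYPE('n))"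
      proof (intro nn_integral_cong)
        fix v :: "real^'n"
        have "f (u, v) = exp (v \<bullet> (transpose M *v u))"
          unfolding f_def case_prod_conv by (rule arg_cong[where f=exp], rule eq)
        thus "ennreal (f (u, v)) = ennreal (exp (v \<bullet> (transpose M *v u)))" by (rule arg_cong)
      qed
      have I2: "ennreal (Cn * exp (eps * norm (transpose M *v u))) \<le> (\<integral>\<^sup>+v. ennreal (exp (v \<bullet> (transpose M *v u))) \<partial>sphere_unif TYPE('n))"
        unfolding Cn_def by (rule sphere_mgf_lower[OF assms])
      have "u \<bullet> (M *v b) = b \<bullet> (transpose M *v u)" by (rule eq)
      also have "\<dots> \<le> norm b * norm (transpose M *v u)" by (rule Cauchy_Schwarz_ineq2[THEN abs_le_D1])
      also have "\<dots> = norm (transpose M *v u)" using b by simp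
      finally have "eps * (u \<bullet> (M *v b)) \<le> eps * norm (transpose M *v u)"
        using assms(1) by (intro mult_left_mono) auto
      hence "Cn * exp (eps * (u \<bullet> (M *v b))) \<le> Cn * exp (eps * norm (transpose M *v u))"
        using Cn_pos by (intro mult_left_mono) auto
      hence "ennreal (Cn * exp (eps * (u \<bullet> (M *v b)))) \<le> ennreal (Cn * exp (eps * norm (transpose M *v u)))"
        by (rule ennreal_leI)
      also note I2
      finally show ?thesis unfolding I1 .
    qed
    have "(\<integral>\<^sup>+u. (\<integral>\<^sup>+v. ennreal (f (u, v)) \<partial>sphere_unif TYPE('n)) \<partial>sphere_unif TYPE('m))
        \<ge> (\<integral>\<^sup>+u. ennreal Cn * ennreal (exp (u \<bullet> (eps *\<^sub>R (M *v b)))) \<partial>sphere_unif TYPE('m))"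
      by (rule nn_integral_mono) (use inner Cn_pos in \<open>simp add: ennreal_mult[symmetric] algebra_simps\<close>)
    also have "(\<integral>\<^sup>+u. ennreal Cn * ennreal (exp (u \<bullet> (eps *\<^sub>R (M *v b)))) \<partial>sphere_unif TYPE('m))
        = ennreal Cn * (\<integral>\<^sup>+u. ennreal (exp (u \<bullet> (eps *\<^sub>R (M *v b)))) \<partial>sphere_unif TYPE('m))"
      by (rule nn_integral_cmult) measurable
    finally have "(\<integral>\<^sup>+u. (\<integral>\<^sup>+v. ennreal (f (u, v)) \<partial>sphere_unif TYPE('n)) \<partial>sphere_unif TYPE('m))
        \<ge> ennreal Cn * (\<integral>\<^sup>+u. ennreal (exp (u \<bullet> (eps *\<^sub>R (M *v b)))) \<partial>sphere_unif TYPE('m))" .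
    moreover have "(\<integral>\<^sup>+u. ennreal (exp (u \<bullet> (eps *\<^sub>R (M *v b)))) \<partial>sphere_unif TYPE('m))
        \<ge> ennreal (Cm * exp (eps * norm (eps *\<^sub>R (M *v b))))"
      unfolding Cm_def by (rule sphere_mgf_lower[OF assms])
    ultimately have "(\<integral>\<^sup>+u. (\<integral>\<^sup>+v. ennreal (f (u, v)) \<partial>sphere_unif TYPE('n)) \<partial>sphere_unif TYPE('m))
        \<ge> ennreal Cn * ennreal (Cm * exp (eps * norm (eps *\<^sub>R (M *v b))))"
    proof -
      assume A1: "ennreal Cn * (\<integral>\<^sup>+u. ennreal (exp (u \<bullet> (eps *\<^sub>R (M *v b)))) \<partial>sphere_unif TYPE('m)) \<le> (\<integral>\<^sup>+u. (\<integral>\<^sup>+v. ennreal (f (u, v)) \<partial>sphere_unif TYPE('n)) \<partial>sphere_unif TYPE('m))"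
        and A2: "ennreal (Cm * exp (eps * norm (eps *\<^sub>R (M *v b)))) \<le> (\<integral>\<^sup>+u. ennreal (exp (u \<bullet> (eps *\<^sub>R (M *v b)))) \<partial>sphere_unif TYPE('m))"
      have "ennreal Cn * ennreal (Cm * exp (eps * norm (eps *\<^sub>R (M *v b)))) \<le> ennreal Cn * (\<integral>\<^sup>+u. ennreal (exp (u \<bullet> (eps *\<^sub>R (M *v b)))) \<partial>sphere_unif TYPE('m))"
        by (rule mult_left_mono[OF A2]) simp
      thus ?thesis using A1 by (rule order_trans)
    qed
    moreover have "ennreal Cn * ennreal (Cm * exp (eps * norm (eps *\<^sub>R (M *v b)))) = ennreal (Cm * Cn * exp (eps\<^sup>2 * norm (M *v b)))"
      using Cn_pos Cm_pos assms by (simp add: ennreal_mult[symmetric] power2_eq_square mult_ac)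
    ultimately show ?thesis unfolding Tonelli by simp
  qed
  (* finiteness *)
  define B where "B = onorm ((*v) M)"
  have fbound: "f (u, v) \<le> exp B" if "norm u \<le> 1" "norm v \<le> 1" for u v
  proof -
    have "u \<bullet> (M *v v) \<le> norm u * norm (M *v v)" by (rule Cauchy_Schwarz_ineq2[THEN abs_le_D1])
    also have "\<dots> \<le> 1 * (B * norm v)"
      using that onorm[OF matrix_vector_mul_bounded_linear[of M], of v]
      by (intro mult_mono) (auto simp: B_def)
    also have "\<dots> \<le> B"
      using that onorm_pos_le[OF matrix_vector_mul_bounded_linear[of M]] by (simp add: B_def mult_left_le)
    finally show ?thesis by (simp add: f_def)
  qed
  have fin: "(\<integral>\<^sup>+p. ennreal (f p) \<partial>(sphere_unif TYPE('m) \<Otimes>\<^sub>M sphere_unif TYPE('n))) < top"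
  proof -
    have inner_bd: "(\<integral>\<^sup>+v. ennreal (f (u, v)) \<partial>sphere_unif TYPE('n)) \<le> ennreal (exp B)" if u: "norm u \<le> 1" for u :: "real^'m"
    proof -
      have "(\<integral>\<^sup>+v. ennreal (f (u, v)) \<partial>sphere_unif TYPE('n)) \<le> (\<integral>\<^sup>+v. ennreal (exp B) \<partial>sphere_unif TYPE('n))"
        by (rule nn_integral_mono_AE) (use sphere_unif_AE_norm[where 'k='n] in \<open>eventually_elim, auto intro!: ennreal_leI fbound u\<close>)
      also have "\<dots> = ennreal (exp B)" by (simp add: Sn.emeasure_space_1)
      finally show ?thesis .
    qed
    have "(\<integral>\<^sup>+u. (\<integral>\<^sup>+v. ennreal (f (u, v)) \<partial>sphere_unif TYPE('n)) \<partial>sphere_unif TYPE('m)) \<le> (\<integral>\<^sup>+u. ennreal (exp B) \<partial>sphere_unif TYPE('m))"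
      by (rule nn_integral_mono_AE) (use sphere_unif_AE_norm[where 'k='m] in \<open>eventually_elim, auto intro!: inner_bd\<close>)
    also have "\<dots> = ennreal (exp B)" by (simp add: Sm.emeasure_space_1)
    finally show ?thesis unfolding Tonelli by (simp add: le_less_trans)
  qed
  have Phi_low: "Phi M \<ge> Cm * Cn * exp (eps\<^sup>2 * norm (M *v b))" if b: "norm b = 1" for b :: "real^'n"
  proof -
    have "enn2real (ennreal (Cm * Cn * exp (eps\<^sup>2 * norm (M *v b)))) \<le> Phi M"
      unfolding Phi_eq by (rule enn2real_mono[OF low[OF b] fin])
    thus ?thesis using Cm_pos Cn_pos by simp
  qed
  obtain b0 :: "real^'n" where b0: "norm b0 = 1"
    using vector_choose_size[of 1] by auto
  have Phi_pos: "Phi M > 0"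
  proof -
    have "0 < Cm * Cn * exp (eps\<^sup>2 * norm (M *v b0))" using Cm_pos Cn_pos by simp
    thus ?thesis using Phi_low[OF b0] by linarith
  qed
  define L where "L = ln (Phi M / (Cm * Cn)) / eps\<^sup>2"
  have eps2: "eps\<^sup>2 > 0" using assms by simp
  have unitL: "norm (M *v b) \<le> L" if b: "norm b = 1" for b :: "real^'n"
  proof -
    have "exp (eps\<^sup>2 * norm (M *v b)) \<le> Phi M / (Cm * Cn)"
      using Phi_low[OF b] Cm_pos Cn_pos by (simp add: field_simps)
    hence "eps\<^sup>2 * norm (M *v b) \<le> ln (Phi M / (Cm * Cn))"
    proof -
      have zp: "Phi M / (Cm * Cn) > 0" using Phi_pos Cm_pos Cn_pos by simp
      show ?thesis using \<open>exp _ \<le> _\<close> exp_le_cancel_iff[of "eps\<^sup>2 * norm (M *v b)" "ln (Phi M / (Cm * Cn))"] exp_ln[OF zp]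
        by simp
    qed
    thus ?thesis using eps2 by (simp add: L_def field_simps)
  qed
  have "onorm ((*v) M) \<le> L"
  proof (rule onorm_le)
    fix x :: "real^'n"
    show "norm (M *v x) \<le> L * norm x"
    proof (cases "x = 0")
      case True thus ?thesis by simp
    next
      case False
      have "norm (M *v (x /\<^sub>R norm x)) \<le> L" using False by (intro unitL) simp
      moreover have "M *v (x /\<^sub>R norm x) = (M *v x) /\<^sub>R norm x"
        by (simp add: matrix_vector_mult_scaleR)
      ultimately show ?thesis using False by (simp add: field_simps)
    qed
  qed
  hence "Cm * Cn * exp (eps\<^sup>2 * onorm ((*v) M)) \<le> Cm * Cn * exp (eps\<^sup>2 * L)"
    using Cm_pos Cn_pos eps2 by (intro mult_left_mono) auto
  also have "Cm * Cn * exp (eps\<^sup>2 * L) = Phi M"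
    using eps2 Phi_pos Cm_pos Cn_pos by (simp add: L_def)
  finally show ?thesis unfolding C_eq M_def by (simp add: eta_contract_eq)
qed


end
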